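(* Let $k$ be a left Noetherian ring. Any submodule of a finitely generated $\mathrm{FS}_B^{\mathrm{op}}$-module over $k$ is itself finitely generated.
   Context: $\mathrm{FS}_B$ is the category whose objects are pairs $(E,\sigma)$ with $E$ a finite set and $\sigma:E\to E$ an involution with exactly one fixed point, and whose morphisms $(E_1,\sigma_1)\to(E_2,\sigma_2)$ are surjective maps $\varphi:E_1\to E_2$ with $\varphi\circ\sigma_1=\sigma_2\circ\varphi$. Every object is isomorphic to $[-n,n]=\{-n,\dots,n\}$ with involution $k\mapsto -k$, for some $n\in\mathbb N$. An $\mathrm{FS}_B^{\mathrm{op}}$-module over $k$ is a contravariant functor from $\mathrm{FS}_B$ to the category of left $k$-modules. For an object $x$, the principal projective $P_x$ is the module sending $y$ to the free $k$-module with basis $\mathrm{Hom}_{\mathrm{FS}_B}(y,x)$, with maps given on basis elements by composition. A module $M$ is finitely generated if there are finitely many objects $x_1,\dots,x_r$ and a surjection $\bigoplus_i P_{x_i}\to M$. *)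

theory Defs
  imports Main "HOL-Library.FuncSet"
begin

definition left_ideal :: "'k::ring_1 set \<Rightarrow> bool" where
  "left_ideal I \<longleftrightarrow> 0 \<in> I \<and> (\<forall>x\<in>I. \<forall>y\<in>I. x + y \<in> I) \<and> (\<forall>x\<in>I. - x \<in> I)
     \<and> (\<forall>r. \<forall>x\<in>I. r * x \<in> I)"

definition left_noetherian :: "'k::ring_1 itself \<Rightarrow> bool" where
  "left_noetherian _ \<longleftrightarrow>
     (\<forall>I :: nat \<Rightarrow> 'k set. (\<forall>n. left_ideal (I n)) \<and> (\<forall>n. I n \<subseteq> I (Suc n))
        \<longrightarrow> (\<exists>N. \<forall>n\<ge>N. I n = I N))"

definition left_module ::
  "'m set \<Rightarrow> ('m \<Rightarrow> 'm \<Rightarrow> 'm) \<Rightarrow> 'm \<Rightarrow> ('k::ring_1 \<Rightarrow> 'm \<Rightarrow> 'm) \<Rightarrow> bool" where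
  "left_module V add z sc \<longleftrightarrow>
     z \<in> V \<and> (\<forall>x\<in>V. \<forall>y\<in>V. add x y \<in> V) \<and> (\<forall>a. \<forall>x\<in>V. sc a x \<in> V)
     \<and> (\<forall>x\<in>V. \<forall>y\<in>V. \<forall>w\<in>V. add (add x y) w = add x (add y w))
     \<and> (\<forall>x\<in>V. \<forall>y\<in>V. add x y = add y x)
     \<and> (\<forall>x\<in>V. add z x = x)
     \<and> (\<forall>x\<in>V. \<exists>y\<in>V. add x y = z)
     \<and> (\<forall>a. \<forall>x\<in>V. \<forall>y\<in>V. sc a (add x y) = add (sc a x) (sc a y))
     \<and> (\<forall>a b. \<forall>x\<in>V. sc (a + b) x = add (sc a x) (sc b x))
     \<and> (\<forall>a b. \<forall>x\<in>V. sc (a * b) x = sc a (sc b x))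
     \<and> (\<forall>x\<in>V. sc 1 x = x)"

text \<open>The object n is [-n,n] = {-n..n} (as integers) with involution i \<mapsto> -i.
  Every object of FS_B is isomorphic to one of these.\<close>

definition symI :: "nat \<Rightarrow> int set" where
  "symI n = {- int n .. int n}"

text \<open>Morphisms [-m,m] \<rightarrow> [-n,n]: surjective maps commuting with the involutions,
  represented extensionally (value undefined outside [-m,m]).\<close>
definition FSB_hom :: "nat \<Rightarrow> nat \<Rightarrow> (int \<Rightarrow> int) set" where
  "FSB_hom m n = {\<phi> \<in> symI m \<rightarrow>\<^sub>E symI n. \<phi> ` symI m = symI n \<and> (\<forall>i\<in>symI m. \<phi> (- i) = - \<phi> i)}"

definition FSB_id :: "nat \<Rightarrow> int \<Rightarrow> int" where
  "FSB_id n = restrict id (symI n)"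

text \<open>Composition of \<phi> : l \<rightarrow> m followed by \<psi> : m \<rightarrow> n.\<close>
definition FSB_comp :: "nat \<Rightarrow> (int \<Rightarrow> int) \<Rightarrow> (int \<Rightarrow> int) \<Rightarrow> int \<Rightarrow> int" where
  "FSB_comp l \<psi> \<phi> = compose (symI l) \<psi> \<phi>"

text \<open>An FS_B^op-module M over k: a left k-module C n (carrier, addition, zero, scalar
  multiplication, all indexed by the object n), and for each morphism \<phi> : m \<rightarrow> n a
  k-linear map act m n \<phi> : M(n) \<rightarrow> M(m), contravariantly functorial.\<close>
definition FSBop_module ::
  "(nat \<Rightarrow> 'm set) \<Rightarrow> (nat \<Rightarrow> 'm \<Rightarrow> 'm \<Rightarrow> 'm) \<Rightarrow> (nat \<Rightarrow> 'm) \<Rightarrow> (nat \<Rightarrow> 'k::ring_1 \<Rightarrow> 'm \<Rightarrow> 'm)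
    \<Rightarrow> (nat \<Rightarrow> nat \<Rightarrow> (int \<Rightarrow> int) \<Rightarrow> 'm \<Rightarrow> 'm) \<Rightarrow> bool" where
  "FSBop_module C add z sc act \<longleftrightarrow>
     (\<forall>n. left_module (C n) (add n) (z n) (sc n))
     \<and> (\<forall>m n. \<forall>\<phi>\<in>FSB_hom m n.
           (\<forall>x\<in>C n. act m n \<phi> x \<in> C m)
         \<and> (\<forall>x\<in>C n. \<forall>y\<in>C n. act m n \<phi> (add n x y) = add m (act m n \<phi> x) (act m n \<phi> y))
         \<and> (\<forall>a. \<forall>x\<in>C n. act m n \<phi> (sc n a x) = sc m a (act m n \<phi> x)))
     \<and> (\<forall>n. \<forall>x\<in>C n. act n n (FSB_id n) x = x)
     \<and> (\<forall>l m n. \<forall>\<phi>\<in>FSB_hom l m. \<forall>\<psi>\<in>FSB_hom m n. \<forall>x\<in>C n.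
           act l n (FSB_comp l \<psi> \<phi>) x = act l m \<phi> (act m n \<psi> x))"

definition FSBop_submodule ::
  "(nat \<Rightarrow> 'm set) \<Rightarrow> (nat \<Rightarrow> 'm \<Rightarrow> 'm \<Rightarrow> 'm) \<Rightarrow> (nat \<Rightarrow> 'm) \<Rightarrow> (nat \<Rightarrow> 'k::ring_1 \<Rightarrow> 'm \<Rightarrow> 'm)
    \<Rightarrow> (nat \<Rightarrow> nat \<Rightarrow> (int \<Rightarrow> int) \<Rightarrow> 'm \<Rightarrow> 'm) \<Rightarrow> (nat \<Rightarrow> 'm set) \<Rightarrow> bool" where
  "FSBop_submodule C add z sc act N \<longleftrightarrow>
     (\<forall>n. N n \<subseteq> C n \<and> z n \<in> N n
          \<and> (\<forall>x\<in>N n. \<forall>y\<in>N n. add n x y \<in> N n)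
          \<and> (\<forall>a. \<forall>x\<in>N n. sc n a x \<in> N n))
     \<and> (\<forall>m n. \<forall>\<phi>\<in>FSB_hom m n. \<forall>x\<in>N n. act m n \<phi> x \<in> N m)"

text \<open>For objects xs = [x_0,...,x_{r-1}], (P_{x_0} \<oplus> ... \<oplus> P_{x_{r-1}})(y) is the free k-module
  with basis the pairs (i,\<phi>) with i < r and \<phi> \<in> Hom(y, x_i); we represent its elements
  as coefficient functions vanishing off the basis.\<close>

definition sumP_basis :: "nat list \<Rightarrow> nat \<Rightarrow> (nat \<times> (int \<Rightarrow> int)) set" where
  "sumP_basis xs y = {(i, \<phi>). i < length xs \<and> \<phi> \<in> FSB_hom y (xs ! i)}"

definition sumP :: "nat list \<Rightarrow> nat \<Rightarrow> (nat \<times> (int \<Rightarrow> int) \<Rightarrow> 'k::ring_1) set" where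
  "sumP xs y = {c. \<forall>p. p \<notin> sumP_basis xs y \<longrightarrow> c p = 0}"

text \<open>The map (P_x)(\<psi>) : P_x(y) \<rightarrow> P_x(y') for \<psi> : y' \<rightarrow> y, sending the basis element \<phi> to
  \<phi> \<circ> \<psi>, written on coefficient functions.\<close>
definition sumP_act ::
  "nat list \<Rightarrow> nat \<Rightarrow> nat \<Rightarrow> (int \<Rightarrow> int) \<Rightarrow> (nat \<times> (int \<Rightarrow> int) \<Rightarrow> 'k::ring_1)
     \<Rightarrow> (nat \<times> (int \<Rightarrow> int) \<Rightarrow> 'k)" where
  "sumP_act xs y' y \<psi> c = (\<lambda>(i, \<phi>').
     if (i, \<phi>') \<in> sumP_basis xs y' then
       (\<Sum>\<phi>\<in>{\<phi> \<in> FSB_hom y (xs ! i). FSB_comp y' \<phi> \<psi> = \<phi>'}. c (i, \<phi>))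
     else 0)"

text \<open>M is finitely generated: there are objects x_1..x_r and a surjective morphism of
  FS_B^op-modules (natural transformation, k-linear in each component)
  P_{x_1} \<oplus> ... \<oplus> P_{x_r} \<rightarrow> M.\<close>
definition FSBop_fg ::
  "(nat \<Rightarrow> 'm set) \<Rightarrow> (nat \<Rightarrow> 'm \<Rightarrow> 'm \<Rightarrow> 'm) \<Rightarrow> (nat \<Rightarrow> 'm) \<Rightarrow> (nat \<Rightarrow> 'k::ring_1 \<Rightarrow> 'm \<Rightarrow> 'm)
    \<Rightarrow> (nat \<Rightarrow> nat \<Rightarrow> (int \<Rightarrow> int) \<Rightarrow> 'm \<Rightarrow> 'm) \<Rightarrow> bool" where
  "FSBop_fg C add z sc act \<longleftrightarrow>
     (\<exists>(xs :: nat list) (F :: nat \<Rightarrow> (nat \<times> (int \<Rightarrow> int) \<Rightarrow> 'k) \<Rightarrow> 'm).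
        (\<forall>y. \<forall>c\<in>sumP xs y. F y c \<in> C y)
      \<and> (\<forall>y. \<forall>c\<in>sumP xs y. \<forall>d\<in>sumP xs y. F y (\<lambda>p. c p + d p) = add y (F y c) (F y d))
      \<and> (\<forall>y a. \<forall>c\<in>sumP xs y. F y (\<lambda>p. a * c p) = sc y a (F y c))
      \<and> (\<forall>y y'. \<forall>\<psi>\<in>FSB_hom y' y. \<forall>c\<in>sumP xs y.
           F y' (sumP_act xs y' y \<psi> c) = act y' y \<psi> (F y c))
      \<and> (\<forall>y. F y ` sumP xs y = C y))"

end

theory Submission
  imports Defs "HOL-Library.Sublist" "HOL-Library.Infinite_Set" "HOL-Library.Ramsey"
    "HOL-Library.Product_Lexorder" "HOL-Library.List_Lexorder"
begin
definition badseq :: "'a set \<Rightarrow> (nat \<Rightarrow> 'a list) \<Rightarrow> bool" where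
  "badseq A f \<longleftrightarrow> (\<forall>n. set (f n) \<subseteq> A) \<and> (\<forall>i j. i < j \<longrightarrow> \<not> subseq (f i) (f j))"

definition hcand :: "'a set \<Rightarrow> 'a list list \<Rightarrow> 'a list set" where
  "hcand A ps = {w. \<exists>f. badseq A f \<and> (\<forall>i<length ps. f i = ps ! i) \<and> f (length ps) = w}"

definition hpick :: "'a set \<Rightarrow> 'a list list \<Rightarrow> 'a list" where
  "hpick A ps = (SOME w. w \<in> hcand A ps \<and> (\<forall>w'\<in>hcand A ps. length w \<le> length w'))"

primrec hpre :: "'a set \<Rightarrow> nat \<Rightarrow> 'a list list" where
  "hpre A 0 = []"
| "hpre A (Suc n) = hpre A n @ [hpick A (hpre A n)]"

lemma hpick_ex:
  assumes "hcand A ps \<noteq> {}"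
  shows "hpick A ps \<in> hcand A ps \<and> (\<forall>w'\<in>hcand A ps. length (hpick A ps) \<le> length w')"
proof -
  from assms obtain w0 where "w0 \<in> hcand A ps" by auto
  hence "\<exists>w. w \<in> hcand A ps \<and> (\<forall>w'. w' \<in> hcand A ps \<longrightarrow> length w \<le> length w')"
    by (rule ex_has_least_nat)
  hence "\<exists>w. w \<in> hcand A ps \<and> (\<forall>w'\<in>hcand A ps. length w \<le> length w')" by blast
  thus ?thesis unfolding hpick_def by (rule someI_ex)
qed

lemma hpre_len: "length (hpre A n) = n"
  by (induct n) auto

lemma hpre_inv:
  assumes "badseq A f0"
  shows "\<exists>f. badseq A f \<and> (\<forall>i<n. f i = hpre A n ! i)"
proof (induct n)
  case 0
  then show ?case using assms by auto
next
  case (Suc n)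
  then obtain f where f: "badseq A f" "\<forall>i<n. f i = hpre A n ! i" by blast
  have "f n \<in> hcand A (hpre A n)" unfolding hcand_def using f by (auto simp: hpre_len)
  hence "hpick A (hpre A n) \<in> hcand A (hpre A n)" using hpick_ex by blast
  then obtain g where g: "badseq A g" "\<forall>i<n. g i = hpre A n ! i" "g n = hpick A (hpre A n)"
    unfolding hcand_def by (auto simp: hpre_len)
  have "\<forall>i<Suc n. g i = hpre A (Suc n) ! i"
    using g by (auto simp: nth_append hpre_len less_Suc_eq)
  with g show ?case by blast
qed

lemma hpre_prefix: "n \<le> k \<Longrightarrow> i < n \<Longrightarrow> hpre A k ! i = hpre A n ! i"
proof (induct k)
  case 0 then show ?case by simp
next
  case (Suc k)
  show ?case
  proof (cases "n = Suc k")
    case False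
    with Suc have "hpre A k ! i = hpre A n ! i" by simp
    moreover have "i < k" using Suc False by simp
    ultimately show ?thesis by (simp add: nth_append hpre_len)
  qed simp
qed

theorem higman:
  fixes f :: "nat \<Rightarrow> 'a list"
  assumes "finite A" "\<forall>n. set (f n) \<subseteq> A"
  shows "\<exists>i j. i < j \<and> subseq (f i) (f j)"
proof (rule ccontr)
  assume "\<not> ?thesis"
  hence bad0: "badseq A f" using assms unfolding badseq_def by blast
  define m where "m n = hpre A (Suc n) ! n" for n
  have mpre: "hpre A k ! i = m i" if "i < k" for i k
    unfolding m_def using hpre_prefix[of "Suc i" k i A] that by simp
  have mbad: "badseq A m"
  proof -
    have "set (m n) \<subseteq> A" for n
    proof -
      obtain g where "badseq A g" "\<forall>i<Suc n. g i = hpre A (Suc n) ! i" using hpre_inv[OF bad0] by blast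
      thus ?thesis unfolding badseq_def using mpre by (metis lessI)
    qed
    moreover have "\<not> subseq (m i) (m j)" if "i < j" for i j
    proof -
      obtain g where "badseq A g" "\<forall>k<Suc j. g k = hpre A (Suc j) ! k" using hpre_inv[OF bad0] by blast
      with that mpre show ?thesis unfolding badseq_def by (metis less_SucI lessI)
    qed
    ultimately show ?thesis unfolding badseq_def by blast
  qed
  have mmin: "length (m n) \<le> length (g n)" if "badseq A g" "\<forall>i<n. g i = m i" for g n
  proof -
    have "g n \<in> hcand A (hpre A n)" unfolding hcand_def using that mpre by (auto simp: hpre_len)
    hence "length (hpick A (hpre A n)) \<le> length (g n)" using hpick_ex by blast
    moreover have "m n = hpick A (hpre A n)" unfolding m_def by (simp add: nth_append hpre_len)
    ultimately show ?thesis by simp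
  qed
  have mne: "m n \<noteq> []" for n
  proof
    assume "m n = []"
    hence "subseq (m n) (m (Suc n))" by simp
    thus False using mbad unfolding badseq_def by blast
  qed
  have "UNIV = (\<Union>a\<in>A. {n. hd (m n) = a})"
  proof -
    have "hd (m n) \<in> A" for n using mbad mne unfolding badseq_def by (metis hd_in_set subsetD)
    thus ?thesis by auto
  qed
  then obtain a where aA: "a \<in> A" and infS: "infinite {n. hd (m n) = a}"
    using assms(1) infinite_UNIV_nat by (metis finite_UN_I)
  define S where "S = {n. hd (m n) = a}"
  define \<phi> where "\<phi> = enumerate S"
  define n0 where "n0 = \<phi> 0"
  have \<phi>S: "hd (m (\<phi> k)) = a" for k using enumerate_in_set[OF infS] unfolding \<phi>_def S_def by auto
  have \<phi>mono: "k < l \<Longrightarrow> \<phi> k < \<phi> l" for k l using enumerate_mono[OF _ infS] unfolding \<phi>_def S_def by auto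
  have \<phi>ge: "n0 \<le> \<phi> k" for k unfolding n0_def using \<phi>mono by (cases k) (auto simp: less_imp_le)
  define g where "g i = (if i < n0 then m i else tl (m (\<phi> (i - n0))))" for i
  have gbad: "badseq A g"
  proof -
    have "set (g n) \<subseteq> A" for n
      using mbad unfolding g_def badseq_def by (auto dest!: list.set_sel(2)[OF mne])
    moreover have "\<not> subseq (g i) (g j)" if ij: "i < j" for i j
    proof
      assume sub: "subseq (g i) (g j)"
      show False
      proof (cases "j < n0")
        case True
        with ij sub show False using mbad unfolding g_def badseq_def by auto
      next
        case jn: False
        show False
        proof (cases "i < n0")
          case True
          with jn sub have "subseq (m i) (tl (m (\<phi> (j - n0))))" unfolding g_def by auto
          hence "subseq (m i) (m (\<phi> (j - n0)))" using mne
            by (metis list.collapse list_emb_Cons)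
          moreover have "i < \<phi> (j - n0)" using True \<phi>ge[of "j-n0"] by simp
          ultimately show False using mbad unfolding badseq_def by blast
        next
          case False
          with jn sub have "subseq (tl (m (\<phi> (i - n0)))) (tl (m (\<phi> (j - n0))))" unfolding g_def by auto
          hence "subseq (hd (m (\<phi> (i - n0))) # tl (m (\<phi> (i - n0)))) (hd (m (\<phi> (j - n0))) # tl (m (\<phi> (j - n0))))"
            using \<phi>S by simp
          hence "subseq (m (\<phi> (i - n0))) (m (\<phi> (j - n0)))" using mne by simp
          moreover have "\<phi> (i - n0) < \<phi> (j - n0)" using False jn ij \<phi>mono by simp
          ultimately show False using mbad unfolding badseq_def by blast
        qed
      qed
    qed
    ultimately show ?thesis unfolding badseq_def by blast
  qed
  have "length (m n0) \<le> length (g n0)" using mmin[OF gbad, of n0] unfolding g_def by auto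
  moreover have "length (g n0) < length (m n0)" unfolding g_def n0_def using mne by simp
  ultimately show False by simp
qed

lemma good_subseq:
  fixes f :: "nat \<Rightarrow> 'a"
  assumes good: "\<And>g::nat \<Rightarrow> 'a. (\<forall>n. g n \<in> T) \<Longrightarrow> \<exists>i j. i < j \<and> R (g i) (g j)"
    and fT: "\<forall>n. f n \<in> T"
  shows "\<exists>\<phi>::nat\<Rightarrow>nat. strict_mono \<phi> \<and> (\<forall>i j. i < j \<longrightarrow> R (f (\<phi> i)) (f (\<phi> j)))"
proof -
  define col where "col X = (if R (f (Min X)) (f (Max X)) then 0 else (1::nat))" for X :: "nat set"
  have "\<exists>Y t. Y \<subseteq> UNIV \<and> infinite Y \<and> t < 2 \<and> (\<forall>x\<in>Y. \<forall>y\<in>Y. x\<noteq>y \<longrightarrow> col {x, y} = t)"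
    by (rule Ramsey2) (auto simp: col_def)
  then obtain Y t where Y: "infinite Y" "t < 2" "\<forall>x\<in>Y. \<forall>y\<in>Y. x\<noteq>y \<longrightarrow> col {x, y} = t" by blast
  define \<phi> where "\<phi> = enumerate Y"
  have sm: "strict_mono \<phi>" unfolding \<phi>_def strict_mono_def using Y(1) enumerate_mono by blast
  have inY: "\<phi> i \<in> Y" for i unfolding \<phi>_def using Y(1) by (rule enumerate_in_set)
  have colij: "col {\<phi> i, \<phi> j} = t" if "i < j" for i j
  proof -
    have "\<phi> i < \<phi> j" using sm that by (simp add: strict_mono_less)
    thus ?thesis using Y(3) inY by auto
  qed
  have Rij: "(R (f (\<phi> i)) (f (\<phi> j))) \<longleftrightarrow> t = 0" if "i < j" for i j
  proof -
    have "\<phi> i < \<phi> j" using sm that by (simp add: strict_mono_less)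
    hence "Min {\<phi> i, \<phi> j} = \<phi> i" "Max {\<phi> i, \<phi> j} = \<phi> j" by (simp_all add: min_def max_def)
    hence "col {\<phi> i, \<phi> j} = (if R (f (\<phi> i)) (f (\<phi> j)) then 0 else 1)" unfolding col_def by simp
    thus ?thesis using colij[OF that] by simp
  qed
  have "\<exists>i j. i < j \<and> R ((f \<circ> \<phi>) i) ((f \<circ> \<phi>) j)"
  proof (rule good)
    show "\<forall>n. (f \<circ> \<phi>) n \<in> T" using fT by simp
  qed
  then obtain i j where ij: "i < j" "R (f (\<phi> i)) (f (\<phi> j))" unfolding comp_def by blast
  have "t = 0"
  proof -
    from Rij[OF ij(1)] ij(2) show "t = 0" by simp
  qed
  have all: "\<forall>i j. i < j \<longrightarrow> R (f (\<phi> i)) (f (\<phi> j))"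
  proof (intro allI impI)
    fix i j :: nat assume "i < j"
    from Rij[OF this] \<open>t = 0\<close> show "R (f (\<phi> i)) (f (\<phi> j))" by simp
  qed
  have "strict_mono \<phi> \<and> (\<forall>i j. i < j \<longrightarrow> R (f (\<phi> i)) (f (\<phi> j)))" using sm all by (rule conjI)
  thus ?thesis by blast
qed

definition lgen :: "'k::ring_1 list \<Rightarrow> 'k set" where
  "lgen as = {a. \<exists>r. a = (\<Sum>l<length as. r l * as ! l)}"

lemma lgen_ideal: "left_ideal (lgen as)"
proof -
  have 0: "0 \<in> lgen as" unfolding lgen_def by (auto intro!: exI[of _ "\<lambda>_. 0"])
  have add: "x + y \<in> lgen as" if "x \<in> lgen as" "y \<in> lgen as" for x y
  proof -
    from that obtain r s where "x = (\<Sum>l<length as. r l * as ! l)" "y = (\<Sum>l<length as. s l * as ! l)"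
      unfolding lgen_def by auto
    hence "x + y = (\<Sum>l<length as. (r l + s l) * as ! l)" by (simp add: sum.distrib distrib_right)
    thus ?thesis unfolding lgen_def by (intro CollectI exI[of _ "\<lambda>l. r l + s l"])
  qed
  have mul: "c * x \<in> lgen as" if "x \<in> lgen as" for x c
  proof -
    from that obtain r where "x = (\<Sum>l<length as. r l * as ! l)" unfolding lgen_def by auto
    hence "c * x = (\<Sum>l<length as. (c * r l) * as ! l)" by (simp add: sum_distrib_left mult.assoc)
    thus ?thesis unfolding lgen_def by (intro CollectI exI[of _ "\<lambda>l. c * r l"])
  qed
  have neg: "- x \<in> lgen as" if "x \<in> lgen as" for x
    using mul[OF that, of "-1"] by simp
  show ?thesis unfolding left_ideal_def using 0 add mul neg by blast
qed

lemma lgen_sub: "left_ideal I \<Longrightarrow> set as \<subseteq> I \<Longrightarrow> lgen as \<subseteq> I"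
proof
  fix a assume I: "left_ideal I" "set as \<subseteq> I" and "a \<in> lgen as"
  then obtain r where a: "a = (\<Sum>l<length as. r l * as ! l)" unfolding lgen_def by auto
  have "(\<Sum>l\<in>L. r l * as ! l) \<in> I" if "L \<subseteq> {..<length as}" for L
    using that
  proof (induct L rule: infinite_finite_induct)
    case (infinite A) then show ?case using I(1) by (simp add: left_ideal_def)
  next
    case empty then show ?case using I(1) by (simp add: left_ideal_def)
  next
    case (insert x F)
    hence "as ! x \<in> I" using I(2) by (auto simp: set_conv_nth)
    hence "r x * as ! x \<in> I" using I(1) by (simp add: left_ideal_def)
    thus ?case using insert I(1) by (simp add: left_ideal_def)
  qed
  thus "a \<in> I" using a by blast
qed

lemma lgen_mem: "a \<in> set as \<Longrightarrow> a \<in> lgen as"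
proof -
  assume "a \<in> set as"
  then obtain k where k: "k < length as" "as ! k = a" by (auto simp: in_set_conv_nth)
  have "(\<Sum>l<length as. (if l = k then 1 else 0) * as ! l) = (\<Sum>l<length as. if l = k then as ! k else 0)"
    by (intro sum.cong) auto
  also have "\<dots> = as ! k" using k(1) by simp
  finally have "as ! k = (\<Sum>l<length as. (if l = k then 1 else 0) * as ! l)" by simp
  thus ?thesis unfolding lgen_def using k(2) by (intro CollectI exI[of _ "\<lambda>l. if l = k then 1 else 0"]) simp
qed

lemma lgen_mono: "lgen as \<subseteq> lgen (as @ bs)"
  by (rule lgen_sub[OF lgen_ideal]) (auto intro: lgen_mem)

lemma noeth_fg:
  fixes I :: "'k::ring_1 set"
  assumes N: "left_noetherian TYPE('k)" and I: "left_ideal I"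
  shows "\<exists>as. set as \<subseteq> I \<and> lgen as = I"
proof (rule ccontr)
  assume H: "\<not> ?thesis"
  define nx where "nx as = (SOME a. a \<in> I \<and> a \<notin> lgen as)" for as :: "'k list"
  have nx: "nx as \<in> I \<and> nx as \<notin> lgen as" if "set as \<subseteq> I" for as
  proof -
    have "lgen as \<subseteq> I" using lgen_sub[OF I that] .
    with H that have "\<exists>a. a \<in> I \<and> a \<notin> lgen as" by blast
    thus ?thesis unfolding nx_def by (rule someI_ex)
  qed
  define L where "L n = ((\<lambda>as. as @ [nx as]) ^^ n) []" for n
  have LS: "L (Suc n) = L n @ [nx (L n)]" for n unfolding L_def by simp
  have LI: "set (L n) \<subseteq> I" for n by (induct n) (auto simp: LS L_def nx)
  have "\<exists>N. \<forall>n\<ge>N. lgen (L n) = lgen (L N)"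
    using N[unfolded left_noetherian_def, rule_format, of "\<lambda>n. lgen (L n)"] by (simp add: lgen_ideal lgen_mono LS)
  then obtain M where M: "\<forall>n\<ge>M. lgen (L n) = lgen (L M)" by blast
  have "Suc M \<ge> M" by simp
  with M have "lgen (L (Suc M)) = lgen (L M)" by blast
  moreover have "nx (L M) \<in> lgen (L (Suc M))" by (simp add: LS lgen_mem)
  ultimately show False using nx[OF LI] by auto
qed

lemma symI_iff: "t \<in> symI n \<longleftrightarrow> - int n \<le> t \<and> t \<le> int n"
  by (simp add: symI_def)

lemma finite_symI[simp]: "finite (symI n)" by (simp add: symI_def)

lemma homD:
  assumes "\<phi> \<in> FSB_hom m n"
  shows "\<phi> \<in> symI m \<rightarrow>\<^sub>E symI n" "\<phi> ` symI m = symI n" "\<And>i. i \<in> symI m \<Longrightarrow> \<phi> (- i) = - \<phi> i"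
    "\<phi> 0 = 0" "\<And>i. i \<in> symI m \<Longrightarrow> \<phi> i \<in> symI n" "\<And>i. i \<notin> symI m \<Longrightarrow> \<phi> i = undefined"
proof -
  show h1: "\<phi> \<in> symI m \<rightarrow>\<^sub>E symI n" "\<phi> ` symI m = symI n" using assms by (auto simp: FSB_hom_def)
  show h3: "\<And>i. i \<in> symI m \<Longrightarrow> \<phi> (- i) = - \<phi> i" using assms by (auto simp: FSB_hom_def)
  have "(0::int) \<in> symI m" by (simp add: symI_def)
  from h3[OF this] show "\<phi> 0 = 0" by simp
  show "\<And>i. i \<in> symI m \<Longrightarrow> \<phi> i \<in> symI n" using h1 by auto
  show "\<And>i. i \<notin> symI m \<Longrightarrow> \<phi> i = undefined" using h1 by (auto simp: PiE_def extensional_def)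
qed

lemma finite_hom: "finite (FSB_hom m n)"
proof -
  have "FSB_hom m n \<subseteq> symI m \<rightarrow>\<^sub>E symI n" by (auto simp: FSB_hom_def)
  thus ?thesis by (rule finite_subset) (simp add: finite_PiE)
qed

lemma comp_val: "t \<in> symI l \<Longrightarrow> FSB_comp l \<psi> \<phi> t = \<psi> (\<phi> t)"
  by (simp add: FSB_comp_def compose_def)

lemma comp_hom:
  assumes "\<phi> \<in> FSB_hom y x" "\<psi> \<in> FSB_hom y' y"
  shows "FSB_comp y' \<phi> \<psi> \<in> FSB_hom y' x"
proof -
  note a = homD[OF assms(1)] and b = homD[OF assms(2)]
  have "FSB_comp y' \<phi> \<psi> \<in> symI y' \<rightarrow>\<^sub>E symI x"
    by (auto simp: FSB_comp_def compose_def a(5) b(5))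
  moreover have "FSB_comp y' \<phi> \<psi> ` symI y' = symI x"
  proof -
    have "FSB_comp y' \<phi> \<psi> ` symI y' = \<phi> ` (\<psi> ` symI y')" by (auto simp: comp_val)
    thus ?thesis using a(2) b(2) by simp
  qed
  moreover have "\<forall>i\<in>symI y'. FSB_comp y' \<phi> \<psi> (- i) = - FSB_comp y' \<phi> \<psi> i"
  proof
    fix i assume i: "i \<in> symI y'"
    hence "- i \<in> symI y'" by (auto simp: symI_def)
    thus "FSB_comp y' \<phi> \<psi> (- i) = - FSB_comp y' \<phi> \<psi> i" using i by (simp add: comp_val b(3) a(3) b(5))
  qed
  ultimately show ?thesis by (simp add: FSB_hom_def)
qed

lemma comp_assoc:
  assumes "\<psi> \<in> FSB_hom y' y"
  shows "FSB_comp y' (FSB_comp y \<eta> \<phi>) \<psi> = FSB_comp y' \<eta> (FSB_comp y' \<phi> \<psi>)"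
proof -
  have "\<psi> \<in> symI y' \<rightarrow> symI y" using homD(5)[OF assms] by auto
  thus ?thesis unfolding FSB_comp_def by (rule compose_assoc[symmetric])
qed

lemma comp_cancel:
  assumes "\<psi> \<in> FSB_hom y' y" "\<phi>1 \<in> FSB_hom y x" "\<phi>2 \<in> FSB_hom y x"
    and "FSB_comp y' \<phi>1 \<psi> = FSB_comp y' \<phi>2 \<psi>"
  shows "\<phi>1 = \<phi>2"
proof
  fix t
  show "\<phi>1 t = \<phi>2 t"
  proof (cases "t \<in> symI y")
    case True
    then obtain s where s: "s \<in> symI y'" "t = \<psi> s" using homD(2)[OF assms(1)] by blast
    have "FSB_comp y' \<phi>1 \<psi> s = FSB_comp y' \<phi>2 \<psi> s" using assms(4) by simp
    thus ?thesis using s by (simp add: comp_val)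
  next
    case False
    thus ?thesis using homD(6)[OF assms(2)] homD(6)[OF assms(3)] by simp
  qed
qed

lemma hom_agree:
  assumes "w1 \<in> FSB_hom y x" "w2 \<in> FSB_hom y x"
    and "\<And>t. 1 \<le> t \<Longrightarrow> t \<le> k \<Longrightarrow> t \<le> int y \<Longrightarrow> w1 t = w2 t"
    and "t \<in> symI y" "\<bar>t\<bar> \<le> k"
  shows "w1 t = w2 t"
proof -
  consider "t = 0" | "t > 0" | "t < 0" by linarith
  thus ?thesis
  proof cases
    case 1 thus ?thesis using homD(4)[OF assms(1)] homD(4)[OF assms(2)] by simp
  next
    case 2 thus ?thesis using assms(3-5) by (auto simp: symI_def)
  next
    case 3
    hence "- t \<in> symI y" "w1 (- t) = w2 (- t)" using assms(3-5) by (auto simp: symI_def)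
    thus ?thesis using homD(3)[OF assms(1), of "-t"] homD(3)[OF assms(2), of "-t"] by simp
  qed
qed

definition key :: "nat \<Rightarrow> nat \<times> (int \<Rightarrow> int) \<Rightarrow> nat \<times> int list" where
  "key y b = (fst b, map (\<lambda>q. snd b (int (Suc q))) [0..<y])"

lemma key_inj:
  assumes "b1 \<in> sumP_basis xs y" "b2 \<in> sumP_basis xs y" "key y b1 = key y b2"
  shows "b1 = b2"
proof -
  obtain i w1 i2 w2 where b: "b1 = (i, w1)" "b2 = (i2, w2)" by (cases b1, cases b2)
  from assms(3) have i: "i2 = i" and L: "map (\<lambda>q. w1 (int (Suc q))) [0..<y] = map (\<lambda>q. w2 (int (Suc q))) [0..<y]"
    by (auto simp: key_def b)
  have h: "w1 \<in> FSB_hom y (xs ! i)" "w2 \<in> FSB_hom y (xs ! i)" using assms(1,2) by (auto simp: sumP_basis_def b i)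
  have pos: "w1 t = w2 t" if "1 \<le> t" "t \<le> int y" for t
  proof -
    have "nat (t - 1) < y" using that by linarith
    hence "w1 (int (Suc (nat (t - 1)))) = w2 (int (Suc (nat (t - 1))))"
      using arg_cong[OF L, of "\<lambda>l. l ! nat (t - 1)"] by simp
    moreover have "int (Suc (nat (t - 1))) = t" using that by simp
    ultimately show ?thesis by simp
  qed
  have "w1 = w2"
  proof
    fix t show "w1 t = w2 t"
    proof (cases "t \<in> symI y")
      case True
      thus ?thesis using hom_agree[OF h, of "int y" t] pos by (auto simp: symI_def)
    next
      case False thus ?thesis using homD(6)[OF h(1)] homD(6)[OF h(2)] by simp
    qed
  qed
  thus ?thesis using b i by simp
qed

definition ordh :: "nat \<Rightarrow> nat \<Rightarrow> (int \<Rightarrow> int) \<Rightarrow> bool" where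
  "ordh y' y \<psi> \<longleftrightarrow> \<psi> \<in> FSB_hom y' y \<and>
     (\<forall>p\<in>{1..int y}. \<exists>i0\<in>{1..int y'}. \<psi> i0 = p \<and> (\<forall>j\<in>{1..int y'}. j < i0 \<longrightarrow> \<bar>\<psi> j\<bar> < p))"

lemma key_pres:
  assumes o: "ordh y' y \<psi>" and b1: "(i1, w1) \<in> sumP_basis xs y" and b2: "(i2, w2) \<in> sumP_basis xs y"
    and lt: "key y (i1, w1) < key y (i2, w2)"
  shows "key y' (i1, FSB_comp y' w1 \<psi>) < key y' (i2, FSB_comp y' w2 \<psi>)"
proof (cases "i1 = i2")
  case False
  thus ?thesis using lt by (auto simp: key_def)
next
  case True
  define L1 where "L1 = map (\<lambda>q. w1 (int (Suc q))) [0..<y]"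
  define L2 where "L2 = map (\<lambda>q. w2 (int (Suc q))) [0..<y]"
  have "L1 < L2" using lt True by (auto simp: key_def L1_def L2_def)
  hence "(L1, L2) \<in> lexord {(u, v). u < v}" by (simp add: list_less_def)
  then obtain k where k: "k < y" "take k L1 = take k L2" "L1 ! k < L2 ! k"
    by (auto simp: lexord_take_index_conv L1_def L2_def)
  have h: "w1 \<in> FSB_hom y (xs ! i1)" "w2 \<in> FSB_hom y (xs ! i1)" using b1 b2 True by (auto simp: sumP_basis_def)
  have hp: "\<psi> \<in> FSB_hom y' y" using o by (simp add: ordh_def)
  have agree: "w1 t = w2 t" if "1 \<le> t" "t \<le> int k" for t
  proof -
    have "nat (t - 1) < k" using that by linarith
    hence "take k L1 ! nat (t - 1) = take k L2 ! nat (t - 1)" using k(2) by simp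
    hence "L1 ! nat (t - 1) = L2 ! nat (t - 1)" using \<open>nat (t - 1) < k\<close> by simp
    moreover have "nat (t - 1) < y" using \<open>nat (t - 1) < k\<close> k(1) by simp
    ultimately show ?thesis using that by (simp add: L1_def L2_def)
  qed
  have lk: "w1 (int k + 1) < w2 (int k + 1)" using k by (simp add: L1_def L2_def add.commute)
  obtain i0 where i0: "i0 \<in> {1..int y'}" "\<psi> i0 = int k + 1"
    "\<forall>j\<in>{1..int y'}. j < i0 \<longrightarrow> \<bar>\<psi> j\<bar> < int k + 1"
  proof -
    have "int k + 1 \<in> {1..int y}" using k(1) by simp
    thus ?thesis using o that unfolding ordh_def by blast
  qed
  define M1 where "M1 = map (\<lambda>q. FSB_comp y' w1 \<psi> (int (Suc q))) [0..<y']"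
  define M2 where "M2 = map (\<lambda>q. FSB_comp y' w2 \<psi> (int (Suc q))) [0..<y']"
  define k' where "k' = nat (i0 - 1)"
  have k'y: "k' < y'" using i0(1) by (simp add: k'_def nat_less_iff)
  have tk: "take k' M1 = take k' M2"
  proof (rule nth_equalityI)
    show "length (take k' M1) = length (take k' M2)" by (simp add: M1_def M2_def)
    fix q assume "q < length (take k' M1)"
    hence q: "q < k'" "q < y'" by (auto simp: M1_def)
    define j where "j = int (Suc q)"
    have j: "j \<in> {1..int y'}" "j < i0" using q by (auto simp: j_def k'_def)
    hence js: "j \<in> symI y'" by (auto simp: symI_def)
    have "\<bar>\<psi> j\<bar> \<le> int k" using i0(3) j by fastforce
    hence "w1 (\<psi> j) = w2 (\<psi> j)" using hom_agree[OF h, of "int k" "\<psi> j"] agree homD(5)[OF hp js] by blast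
    thus "take k' M1 ! q = take k' M2 ! q" using q js by (simp add: M1_def M2_def comp_val j_def)
  qed
  have "M1 ! k' < M2 ! k'"
  proof -
    have "int (Suc k') = i0" using i0(1) by (simp add: k'_def)
    moreover have "i0 \<in> symI y'" using i0(1) by (auto simp: symI_def)
    ultimately show ?thesis using k'y lk i0(2) by (simp add: M1_def M2_def comp_val)
  qed
  hence "(M1, M2) \<in> lexord {(u, v). u < v}"
    using tk k'y by (auto simp: lexord_take_index_conv M1_def M2_def)
  hence "M1 < M2" by (simp add: list_less_def)
  thus ?thesis using True by (simp add: key_def M1_def M2_def)
qed

definition hword :: "nat \<Rightarrow> nat \<Rightarrow> (int \<Rightarrow> int) \<Rightarrow> (nat \<times> int \<times> int set) list" where
  "hword y i w = map (\<lambda>q. (i, w (int q), w ` {0..<int q})) [0..<Suc y]"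

lemma emb_index:
  assumes "list_emb P xs ys"
  shows "\<exists>\<iota>. (\<forall>p<length xs. \<iota> p < length ys \<and> P (xs ! p) (ys ! \<iota> p)) \<and> (\<forall>p q. p < q \<longrightarrow> q < length xs \<longrightarrow> \<iota> p < \<iota> q)"
  using assms
proof (induct rule: list_emb.induct)
  case (list_emb_Nil ys)
  then show ?case by auto
next
  case (list_emb_Cons xs ys y)
  then obtain \<iota> where i: "\<forall>p<length xs. \<iota> p < length ys \<and> P (xs ! p) (ys ! \<iota> p)"
    "\<forall>p q. p < q \<longrightarrow> q < length xs \<longrightarrow> \<iota> p < \<iota> q" by blast
  show ?case
    by (rule exI[of _ "\<lambda>p. Suc (\<iota> p)"]) (use i in auto)
next
  case (list_emb_Cons2 x y xs ys)
  then obtain \<iota> where i: "\<forall>p<length xs. \<iota> p < length ys \<and> P (xs ! p) (ys ! \<iota> p)"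
    "\<forall>p q. p < q \<longrightarrow> q < length xs \<longrightarrow> \<iota> p < \<iota> q" by blast
  define \<kappa> where "\<kappa> p = (if p = 0 then 0 else Suc (\<iota> (p - 1)))" for p
  have "\<forall>p<length (x # xs). \<kappa> p < length (y # ys) \<and> P ((x # xs) ! p) ((y # ys) ! \<kappa> p)"
    using i(1) list_emb_Cons2(1) by (auto simp: \<kappa>_def nth_Cons')
  moreover have "\<forall>p q. p < q \<longrightarrow> q < length (x # xs) \<longrightarrow> \<kappa> p < \<kappa> q"
    using i(2) by (auto simp: \<kappa>_def)
  ultimately show ?case by blast
qed

lemma hword_len: "length (hword y i w) = Suc y"
  by (simp add: hword_def)

lemma hword_nth: "p \<le> y \<Longrightarrow> hword y i w ! p = (i, w (int p), w ` {0..<int p})"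
  by (simp add: hword_def nth_map less_Suc_eq_le del: upt_Suc)

lemma emb_same_i:
  assumes "subseq (hword n i f) (hword n' i' g)"
  shows "i = i'"
proof -
  obtain \<iota> where "\<forall>p<length (hword n i f). \<iota> p < length (hword n' i' g) \<and> hword n i f ! p = hword n' i' g ! \<iota> p"
    using emb_index[OF assms] by blast
  hence "\<iota> 0 \<le> n'" "hword n i f ! 0 = hword n' i' g ! \<iota> 0" by (auto simp: hword_len)
  thus ?thesis by (simp add: hword_nth)
qed

lemma emb_div:
  assumes f: "f \<in> FSB_hom n x" and g: "g \<in> FSB_hom n' x"
    and e: "subseq (hword n i f) (hword n' i g)"
  shows "\<exists>h. ordh n' n h \<and> g = FSB_comp n' f h"
proof -
  obtain \<iota> where \<iota>0: "\<forall>p<Suc n. \<iota> p < Suc n' \<and> hword n i f ! p = hword n' i g ! \<iota> p"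
    and \<iota>m: "\<forall>p q. p < q \<longrightarrow> q < Suc n \<longrightarrow> \<iota> p < \<iota> q"
    using emb_index[OF e] by (auto simp: hword_len)
  have \<iota>le: "\<iota> p \<le> n'" if "p \<le> n" for p
  proof -
    have "p < Suc n" using that by simp
    with \<iota>0 have "\<iota> p < Suc n'" by blast
    thus ?thesis by simp
  qed
  have lab: "f (int p) = g (int (\<iota> p)) \<and> f ` {0..<int p} = g ` {0..<int (\<iota> p)}" if "p \<le> n" for p
  proof -
    have "p < Suc n" using that by simp
    with \<iota>0 have "hword n i f ! p = hword n' i g ! \<iota> p" by blast
    thus ?thesis using that \<iota>le[OF that] by (simp add: hword_nth)
  qed
  have \<iota>mono: "\<iota> p < \<iota> q" if "p < q" "q \<le> n" for p q using \<iota>m that by auto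
  have \<iota>monole: "\<iota> p \<le> \<iota> q \<longleftrightarrow> p \<le> q" if "p \<le> n" "q \<le> n" for p q
    using \<iota>mono that by (metis le_less not_le)
  have \<iota>00: "\<iota> 0 = 0"
  proof -
    have "g ` {0..<int (\<iota> 0)} = {}" using lab[of 0] by simp
    thus ?thesis by simp
  qed
  note fh = homD[OF f] and gh = homD[OF g]
  define PS where "PS j = {p. p \<le> n \<and> \<iota> p \<le> j}" for j
  define P where "P j = Max (PS j)" for j
  have PS_fin: "finite (PS j)" for j unfolding PS_def by simp
  have PS_ne: "0 \<in> PS j" for j unfolding PS_def using \<iota>00 by simp
  have P_in: "P j \<le> n \<and> \<iota> (P j) \<le> j" for j
  proof -
    have "P j \<in> PS j" unfolding P_def using Max_in[OF PS_fin, of j] PS_ne by blast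
    thus ?thesis unfolding PS_def by simp
  qed
  have P_max: "p \<le> P j" if "p \<le> n" "\<iota> p \<le> j" for p j
    using Max_ge[OF PS_fin, of p j] that unfolding P_def PS_def by auto
  have P_\<iota>: "P (\<iota> p) = p" if "p \<le> n" for p
  proof -
    have a: "p \<le> P (\<iota> p)" using P_max[OF that, of "\<iota> p"] by simp
    have "P (\<iota> p) \<le> n" "\<iota> (P (\<iota> p)) \<le> \<iota> p" using P_in[of "\<iota> p"] by auto
    hence "P (\<iota> p) \<le> p" using \<iota>monole[of "P (\<iota> p)" p] that by simp
    with a show ?thesis by simp
  qed
  define hpos where "hpos j = (if \<iota> (P j) = j then int (P j)
      else (SOME s. s \<in> symI n \<and> \<bar>s\<bar> \<le> int (P j) \<and> f s = g (int j)))" for j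
  have hpos_prop: "hpos j \<in> symI n \<and> \<bar>hpos j\<bar> \<le> int (P j) \<and> f (hpos j) = g (int j)" if "j \<le> n'" for j
  proof (cases "\<iota> (P j) = j")
    case True
    then show ?thesis using P_in[of j] lab[of "P j"] by (auto simp: hpos_def symI_def)
  next
    case False
    have ex: "\<exists>s. s \<in> symI n \<and> \<bar>s\<bar> \<le> int (P j) \<and> f s = g (int j)"
    proof (cases "P j < n")
      case True
      have "\<not> \<iota> (Suc (P j)) \<le> j" using P_max[of "Suc (P j)" j] True by auto
      hence "int j \<in> {0..<int (\<iota> (Suc (P j)))}" by simp
      hence "g (int j) \<in> f ` {0..<int (Suc (P j))}" using lab[of "Suc (P j)"] True by auto
      then obtain s where s: "s \<in> {0..<int (Suc (P j))}" "f s = g (int j)" by auto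
      hence "s \<in> symI n" "\<bar>s\<bar> \<le> int (P j)" using True by (auto simp: symI_def)
      thus ?thesis using s by blast
    next
      case False
      hence Pn: "P j = n" using P_in[of j] by simp
      have "int j \<in> symI n'" using that by (simp add: symI_def)
      hence "g (int j) \<in> symI x" using gh(5) by blast
      hence "g (int j) \<in> f ` symI n" using fh(2) by simp
      then obtain s where "s \<in> symI n" "f s = g (int j)" by auto
      moreover hence "\<bar>s\<bar> \<le> int (P j)" using Pn by (auto simp: symI_def)
      ultimately show ?thesis by blast
    qed
    show ?thesis unfolding hpos_def using False someI_ex[OF ex] by simp
  qed
  have hpos_\<iota>: "hpos (\<iota> p) = int p" if "p \<le> n" for p
    using P_\<iota>[OF that] by (simp add: hpos_def)
  define h where "h t = (if t \<in> symI n' then (if 0 \<le> t then hpos (nat t) else - hpos (nat (- t))) else undefined)" for t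
  have h0: "h 0 = 0" using hpos_\<iota>[of 0] \<iota>00 by (simp add: h_def symI_def)
  have hodd: "h (- t) = - h t" if "t \<in> symI n'" for t
  proof -
    have "- t \<in> symI n'" using that by (auto simp: symI_def)
    consider "t = 0" | "t > 0" | "t < 0" by linarith
    thus ?thesis
    proof cases
      case 1 thus ?thesis using h0 by simp
    qed (use that \<open>- t \<in> symI n'\<close> in \<open>auto simp: h_def\<close>)
  qed
  have hval: "h t \<in> symI n \<and> f (h t) = g t" if "t \<in> symI n'" for t
  proof (cases "0 \<le> t")
    case True
    hence "nat t \<le> n'" using that by (auto simp: symI_def)
    thus ?thesis using hpos_prop[of "nat t"] that True by (simp add: h_def)
  next
    case False
    hence nt: "nat (- t) \<le> n'" using that by (auto simp: symI_def)
    have mt: "- t \<in> symI n'" using that by (auto simp: symI_def)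
    from hpos_prop[OF nt] have A: "hpos (nat (- t)) \<in> symI n" "f (hpos (nat (- t))) = g (- t)"
      using False by auto
    have "- hpos (nat (- t)) \<in> symI n" using A(1) by (auto simp: symI_def)
    moreover have "f (- hpos (nat (- t))) = g t"
      using fh(3)[OF A(1)] A(2) gh(3)[OF mt] by simp
    ultimately show ?thesis using that False by (simp add: h_def)
  qed
  have hhom: "h \<in> FSB_hom n' n"
  proof -
    have "h \<in> symI n' \<rightarrow>\<^sub>E symI n" using hval by (auto simp: h_def)
    moreover have "h ` symI n' = symI n"
    proof
      show "h ` symI n' \<subseteq> symI n" using hval by auto
      show "symI n \<subseteq> h ` symI n'"
      proof
        fix s assume s: "s \<in> symI n"
        show "s \<in> h ` symI n'"
        proof (cases "0 \<le> s")
          case True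
          hence sn: "nat s \<le> n" using s by (auto simp: symI_def)
          have "int (\<iota> (nat s)) \<in> symI n'" using \<iota>le[OF sn] by (simp add: symI_def)
          moreover have "h (int (\<iota> (nat s))) = s" using hpos_\<iota>[OF sn] True calculation by (simp add: h_def)
          ultimately show ?thesis by (metis image_eqI)
        next
          case False
          hence sn: "nat (- s) \<le> n" using s by (auto simp: symI_def)
          have m: "int (\<iota> (nat (- s))) \<in> symI n'" using \<iota>le[OF sn] by (simp add: symI_def)
          hence "- int (\<iota> (nat (- s))) \<in> symI n'" by (auto simp: symI_def)
          moreover have "h (- int (\<iota> (nat (- s)))) = s"
            using hodd[OF m] hpos_\<iota>[OF sn] False m by (simp add: h_def)
          ultimately show ?thesis by (metis image_eqI)
        qed
      qed
    qed
    ultimately show ?thesis using hodd by (simp add: FSB_hom_def)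
  qed
  have ord: "ordh n' n h"
    unfolding ordh_def
  proof (intro conjI ballI)
    show "h \<in> FSB_hom n' n" by (rule hhom)
    fix p assume p: "p \<in> {1..int n}"
    define q where "q = nat p"
    have q: "q \<le> n" "1 \<le> q" "int q = p" using p by (auto simp: q_def)
    have iq: "1 \<le> \<iota> q" using \<iota>mono[of 0 q] q \<iota>00 by simp
    have iqs: "int (\<iota> q) \<in> symI n'" using \<iota>le[OF q(1)] by (simp add: symI_def)
    show "\<exists>i0\<in>{1..int n'}. h i0 = p \<and> (\<forall>j\<in>{1..int n'}. j < i0 \<longrightarrow> \<bar>h j\<bar> < p)"
    proof (intro bexI conjI ballI impI)
      show "int (\<iota> q) \<in> {1..int n'}" using iq \<iota>le[OF q(1)] by simp
      show "h (int (\<iota> q)) = p" using hpos_\<iota>[OF q(1)] q iqs by (simp add: h_def)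
      fix j assume j: "j \<in> {1..int n'}" "j < int (\<iota> q)"
      define jn where "jn = nat j"
      have jn: "jn \<le> n'" "int jn = j" "jn < \<iota> q" using j by (auto simp: jn_def)
      have "P jn < q"
      proof (rule ccontr)
        assume "\<not> P jn < q"
        hence "q \<le> P jn" by simp
        hence "\<iota> q \<le> \<iota> (P jn)" using \<iota>monole q(1) P_in by blast
        thus False using P_in[of jn] jn by simp
      qed
      moreover have "\<bar>h j\<bar> \<le> int (P jn)" using hpos_prop[OF jn(1)] jn j by (simp add: h_def symI_def jn_def)
      ultimately show "\<bar>h j\<bar> < p" using q by simp
    qed
  qed
  have "g = FSB_comp n' f h"
  proof
    fix t show "g t = FSB_comp n' f h t"
    proof (cases "t \<in> symI n'")
      case True thus ?thesis using hval by (simp add: comp_val)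
    next
      case False thus ?thesis using gh(6) by (simp add: FSB_comp_def compose_def)
    qed
  qed
  with ord show ?thesis by blast
qed


definition Tset :: "nat list \<Rightarrow> (nat \<times> nat \<times> (int \<Rightarrow> int)) set" where
  "Tset xs = {(y, i, w). i < length xs \<and> w \<in> FSB_hom y (xs ! i)}"

definition divd :: "nat \<times> nat \<times> (int \<Rightarrow> int) \<Rightarrow> nat \<times> nat \<times> (int \<Rightarrow> int) \<Rightarrow> bool" where
  "divd b b' \<longleftrightarrow> fst (snd b) = fst (snd b') \<and>
     (\<exists>\<psi>. ordh (fst b') (fst b) \<psi> \<and> snd (snd b') = FSB_comp (fst b') (snd (snd b)) \<psi>)"

lemma div_good:
  fixes s :: "nat \<Rightarrow> nat \<times> nat \<times> (int \<Rightarrow> int)"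
  assumes sT: "\<forall>n. s n \<in> Tset xs"
  shows "\<exists>i j. i < j \<and> divd (s i) (s j)"
proof -
  define X where "X = Max (insert 0 (set xs))"
  have xX: "xs ! i \<le> X" if "i < length xs" for i
    unfolding X_def using that by (intro Max_ge) auto
  define A where "A = {..<length xs} \<times> symI X \<times> Pow (symI X)"
  have finA: "finite A" unfolding A_def by simp
  have symsub: "symI (xs ! i) \<subseteq> symI X" if "i < length xs" for i
    using xX[OF that] by (auto simp: symI_def)
  define W where "W n = (case s n of (y, i, w) \<Rightarrow> hword y i w)" for n
  have WA: "set (W n) \<subseteq> A" for n
  proof -
    obtain y i w where sn: "s n = (y, i, w)" by (cases "s n") auto
    have "s n \<in> Tset xs" using sT by blast
    with sn have iw: "i < length xs" "w \<in> FSB_hom y (xs ! i)" by (auto simp: Tset_def)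
    note wh = homD[OF iw(2)]
    have "(i, w (int q), w ` {0..<int q}) \<in> A" if "q < Suc y" for q
    proof -
      have q: "int q \<in> symI y" using that by (simp add: symI_def)
      have "w (int q) \<in> symI X" using wh(5)[OF q] symsub[OF iw(1)] by blast
      moreover have "w ` {0..<int q} \<subseteq> symI X"
      proof -
        have "{0..<int q} \<subseteq> symI y" using that by (auto simp: symI_def)
        hence "w ` {0..<int q} \<subseteq> w ` symI y" by blast
        thus ?thesis using wh(2) symsub[OF iw(1)] by blast
      qed
      ultimately show ?thesis using iw(1) by (simp add: A_def)
    qed
    thus ?thesis by (auto simp: W_def sn hword_def)
  qed
  obtain i j where ij: "i < j" "subseq (W i) (W j)" using higman[OF finA, of W] WA by blast
  obtain y a w where si: "s i = (y, a, w)" by (cases "s i") auto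
  obtain y' a' w' where sj: "s j = (y', a', w')" by (cases "s j") auto
  have e: "subseq (hword y a w) (hword y' a' w')" using ij(2) by (simp add: W_def si sj)
  have aa: "a = a'" using emb_same_i[OF e] .
  have "s i \<in> Tset xs" "s j \<in> Tset xs" using sT by blast+
  hence h: "w \<in> FSB_hom y (xs ! a)" "w' \<in> FSB_hom y' (xs ! a)" using si sj aa by (auto simp: Tset_def)
  obtain \<psi> where "ordh y' y \<psi> \<and> w' = FSB_comp y' w \<psi>" using emb_div[OF h] e aa by blast
  hence "divd (s i) (s j)" by (auto simp: divd_def si sj aa)
  thus ?thesis using ij(1) by blast
qed

lemma finite_basis: "finite (sumP_basis xs y)"
proof -
  have "sumP_basis xs y \<subseteq> (\<Union>i<length xs. {i} \<times> FSB_hom y (xs ! i))"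
    by (auto simp: sumP_basis_def)
  thus ?thesis by (rule finite_subset) (auto intro: finite_hom)
qed

lemma sumP_zero: "(\<lambda>_. 0) \<in> sumP xs y" by (simp add: sumP_def)

lemma sumP_add: "c \<in> sumP xs y \<Longrightarrow> d \<in> sumP xs y \<Longrightarrow> (\<lambda>p. c p + d p) \<in> sumP xs y"
  by (simp add: sumP_def)

lemma sumP_sc: "c \<in> sumP xs y \<Longrightarrow> (\<lambda>p. a * c p) \<in> sumP xs y"
  by (simp add: sumP_def)

lemma sumP_out: "c \<in> sumP xs y \<Longrightarrow> p \<notin> sumP_basis xs y \<Longrightarrow> c p = 0"
  unfolding sumP_def by blast

lemma act_sumP: "sumP_act xs y' y \<psi> c \<in> sumP xs y'"
  by (auto simp: sumP_def sumP_act_def)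

lemma act_app: "(i, \<chi>) \<in> sumP_basis xs y' \<Longrightarrow>
  sumP_act xs y' y \<psi> c (i, \<chi>) = (\<Sum>\<phi>\<in>{\<phi> \<in> FSB_hom y (xs ! i). FSB_comp y' \<phi> \<psi> = \<chi>}. c (i, \<phi>))"
  by (simp add: sumP_act_def)

lemma act_app_out: "p \<notin> sumP_basis xs y' \<Longrightarrow> sumP_act xs y' y \<psi> c p = 0"
  by (auto simp: sumP_act_def split: prod.splits)

lemma act_add: "sumP_act xs y' y \<psi> (\<lambda>p. c p + d p) = (\<lambda>p. sumP_act xs y' y \<psi> c p + sumP_act xs y' y \<psi> d p)"
  by (auto simp: sumP_act_def sum.distrib fun_eq_iff split: prod.splits)

lemma act_sc: "sumP_act xs y' y \<psi> (\<lambda>p. a * c p) = (\<lambda>p. a * sumP_act xs y' y \<psi> c p)"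
  by (auto simp: sumP_act_def sum_distrib_left fun_eq_iff split: prod.splits)

lemma act_sum:
  assumes "finite A"
  shows "sumP_act xs y' y \<psi> (\<lambda>p. \<Sum>q\<in>A. c q * h q p) = (\<lambda>p. \<Sum>q\<in>A. c q * sumP_act xs y' y \<psi> (h q) p)"
proof
  fix p :: "nat \<times> (int \<Rightarrow> int)"
  obtain i \<chi> where p: "p = (i, \<chi>)" by (cases p)
  show "sumP_act xs y' y \<psi> (\<lambda>p. \<Sum>q\<in>A. c q * h q p) p = (\<Sum>q\<in>A. c q * sumP_act xs y' y \<psi> (h q) p)"
  proof (cases "p \<in> sumP_basis xs y'")
    case True
    then show ?thesis unfolding p
      by (simp add: act_app[OF True[unfolded p]] sum_distrib_left) (rule sum.swap)
  next
    case False
    then show ?thesis by (simp add: act_app_out)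
  qed
qed

lemma act_comp:
  assumes \<psi>: "\<psi> \<in> FSB_hom y' y" and \<phi>: "\<phi> \<in> FSB_hom y z"
  shows "sumP_act xs y' y \<psi> (sumP_act xs y z \<phi> g) = sumP_act xs y' z (FSB_comp y' \<phi> \<psi>) g"
proof
  fix p :: "nat \<times> (int \<Rightarrow> int)"
  obtain i \<chi> where p: "p = (i, \<chi>)" by (cases p)
  show "sumP_act xs y' y \<psi> (sumP_act xs y z \<phi> g) p = sumP_act xs y' z (FSB_comp y' \<phi> \<psi>) g p"
  proof (cases "p \<in> sumP_basis xs y'")
    case False
    then show ?thesis by (simp add: act_app_out)
  next
    case True
    hence i: "i < length xs" by (simp add: p sumP_basis_def)
    define T where "T = {\<theta> \<in> FSB_hom y (xs ! i). FSB_comp y' \<theta> \<psi> = \<chi>}"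
    define V where "V = {\<eta> \<in> FSB_hom z (xs ! i). FSB_comp y' \<eta> (FSB_comp y' \<phi> \<psi>) = \<chi>}"
    have inB: "(i, \<theta>) \<in> sumP_basis xs y" if "\<theta> \<in> T" for \<theta> using that i by (simp add: T_def sumP_basis_def)
    have "sumP_act xs y' y \<psi> (sumP_act xs y z \<phi> g) p = (\<Sum>\<theta>\<in>T. sumP_act xs y z \<phi> g (i, \<theta>))"
      using True by (simp add: p act_app T_def)
    also have "\<dots> = (\<Sum>\<theta>\<in>T. \<Sum>\<eta>\<in>{\<eta> \<in> FSB_hom z (xs ! i). FSB_comp y \<eta> \<phi> = \<theta>}. g (i, \<eta>))"
      by (rule sum.cong) (auto simp: act_app inB)
    also have "\<dots> = (\<Sum>\<theta>\<in>T. \<Sum>\<eta>\<in>{\<eta> \<in> V. FSB_comp y \<eta> \<phi> = \<theta>}. g (i, \<eta>))"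
    proof (rule sum.cong[OF refl], rule sum.cong)
      fix \<theta> assume "\<theta> \<in> T"
      thus "{\<eta> \<in> FSB_hom z (xs ! i). FSB_comp y \<eta> \<phi> = \<theta>} = {\<eta> \<in> V. FSB_comp y \<eta> \<phi> = \<theta>}"
        using comp_assoc[OF \<psi>] by (auto simp: T_def V_def)
    qed simp
    also have "\<dots> = (\<Sum>\<eta>\<in>V. g (i, \<eta>))"
    proof (rule sum.group)
      show "finite V" unfolding V_def using finite_hom by simp
      show "finite T" unfolding T_def using finite_hom by simp
      show "(\<lambda>\<eta>. FSB_comp y \<eta> \<phi>) ` V \<subseteq> T"
        using comp_hom[OF _ \<phi>] comp_assoc[OF \<psi>] by (auto simp: T_def V_def)
    qed
    also have "\<dots> = sumP_act xs y' z (FSB_comp y' \<phi> \<psi>) g p"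
      using True by (simp add: p act_app V_def)
    finally show ?thesis .
  qed
qed

definition vanab :: "nat list \<Rightarrow> nat \<Rightarrow> nat \<times> (int \<Rightarrow> int) \<Rightarrow> (nat \<times> (int \<Rightarrow> int) \<Rightarrow> 'k::ring_1) \<Rightarrow> bool" where
  "vanab xs y b c \<longleftrightarrow> (\<forall>b'\<in>sumP_basis xs y. key y b < key y b' \<longrightarrow> c b' = 0)"

lemma act_lead:
  assumes o: "ordh y' y \<psi>" and c: "c \<in> sumP xs y" and b: "(i, w) \<in> sumP_basis xs y"
    and v: "vanab xs y (i, w) c"
  shows "vanab xs y' (i, FSB_comp y' w \<psi>) (sumP_act xs y' y \<psi> c)"
    and "sumP_act xs y' y \<psi> c (i, FSB_comp y' w \<psi>) = c (i, w)"
proof -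
  have \<psi>: "\<psi> \<in> FSB_hom y' y" using o by (simp add: ordh_def)
  have wh: "w \<in> FSB_hom y (xs ! i)" and i: "i < length xs" using b by (auto simp: sumP_basis_def)
  have bw: "(i, FSB_comp y' w \<psi>) \<in> sumP_basis xs y'" using comp_hom[OF wh \<psi>] i by (simp add: sumP_basis_def)
  show "sumP_act xs y' y \<psi> c (i, FSB_comp y' w \<psi>) = c (i, w)"
  proof -
    have "{\<phi> \<in> FSB_hom y (xs ! i). FSB_comp y' \<phi> \<psi> = FSB_comp y' w \<psi>} = {w}"
      using comp_cancel[OF \<psi> _ wh] wh by auto
    thus ?thesis using bw by (simp add: act_app)
  qed
  show "vanab xs y' (i, FSB_comp y' w \<psi>) (sumP_act xs y' y \<psi> c)"
    unfolding vanab_def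
  proof (intro ballI impI)
    fix b' assume b': "b' \<in> sumP_basis xs y'" and lt: "key y' (i, FSB_comp y' w \<psi>) < key y' b'"
    obtain i' \<chi> where b'e: "b' = (i', \<chi>)" by (cases b')
    have "c (i', \<phi>) = 0" if \<phi>: "\<phi> \<in> FSB_hom y (xs ! i')" "FSB_comp y' \<phi> \<psi> = \<chi>" for \<phi>
    proof -
      have b2: "(i', \<phi>) \<in> sumP_basis xs y" using \<phi> b' b'e by (simp add: sumP_basis_def)
      consider "key y (i, w) < key y (i', \<phi>)" | "key y (i, w) = key y (i', \<phi>)" | "key y (i', \<phi>) < key y (i, w)"
        by fastforce
      thus ?thesis
      proof cases
        case 1 thus ?thesis using v b2 by (simp add: vanab_def)
      next
        case 2
        hence "(i, w) = (i', \<phi>)" using key_inj[OF b b2] by simp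
        hence "key y' b' = key y' (i, FSB_comp y' w \<psi>)" using \<phi>(2) b'e by simp
        thus ?thesis using lt by simp
      next
        case 3
        have "key y' (i', FSB_comp y' \<phi> \<psi>) < key y' (i, FSB_comp y' w \<psi>)" by (rule key_pres[OF o b2 b 3])
        thus ?thesis using lt \<phi>(2) b'e by simp
      qed
    qed
    thus "sumP_act xs y' y \<psi> c b' = 0" using b' by (simp add: b'e act_app)
  qed
qed

definition Gm :: "nat list \<Rightarrow> (nat \<times> (nat \<times> (int \<Rightarrow> int) \<Rightarrow> 'k::ring_1)) list \<Rightarrow> nat
    \<Rightarrow> (nat \<times> (int \<Rightarrow> int) \<Rightarrow> 'k) \<Rightarrow> (nat \<times> (int \<Rightarrow> int) \<Rightarrow> 'k)" where
  "Gm xs gens y c = (\<lambda>p. \<Sum>q\<in>sumP_basis (map fst gens) y.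
      c q * sumP_act xs y (fst (gens ! fst q)) (snd q) (snd (gens ! fst q)) p)"

lemma G_sumP: "Gm xs gens y c \<in> sumP xs y"
  by (simp add: sumP_def Gm_def act_app_out)

lemma G_add: "Gm xs gens y (\<lambda>q. c q + d q) = (\<lambda>p. Gm xs gens y c p + Gm xs gens y d p)"
  by (simp add: Gm_def distrib_right sum.distrib)

lemma G_sc: "Gm xs gens y (\<lambda>q. a * c q) = (\<lambda>p. a * Gm xs gens y c p)"
  by (simp add: Gm_def sum_distrib_left mult.assoc)

lemma G_zero: "Gm xs gens y (\<lambda>q. 0) = (\<lambda>p. 0)"
  by (simp add: Gm_def)

lemma delta_sumP: "q0 \<in> sumP_basis xs' y \<Longrightarrow> (\<lambda>q. if q = q0 then a else 0) \<in> sumP xs' y"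
  by (auto simp: sumP_def)

lemma G_delta:
  assumes "(j, \<phi>) \<in> sumP_basis (map fst gens) y"
  shows "Gm xs gens y (\<lambda>q. if q = (j, \<phi>) then 1 else 0) = sumP_act xs y (fst (gens ! j)) \<phi> (snd (gens ! j))"
proof
  fix p
  have "Gm xs gens y (\<lambda>q. if q = (j, \<phi>) then 1 else 0) p =
    (\<Sum>q\<in>sumP_basis (map fst gens) y. if q = (j, \<phi>) then sumP_act xs y (fst (gens ! fst q)) (snd q) (snd (gens ! fst q)) p else 0)"
    unfolding Gm_def by (intro sum.cong) auto
  also have "\<dots> = sumP_act xs y (fst (gens ! j)) \<phi> (snd (gens ! j)) p"
    using assms finite_basis by (simp add: sum.delta')
  finally show "Gm xs gens y (\<lambda>q. if q = (j, \<phi>) then 1 else 0) p = sumP_act xs y (fst (gens ! j)) \<phi> (snd (gens ! j)) p" .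
qed

lemma G_nat:
  assumes \<psi>: "\<psi> \<in> FSB_hom y' y"
  shows "Gm xs gens y' (sumP_act (map fst gens) y' y \<psi> c) = sumP_act xs y' y \<psi> (Gm xs gens y c)"
proof
  fix p
  define xs' where "xs' = map fst gens"
  define H where "H q' = sumP_act xs y' (fst (gens ! fst q')) (snd q') (snd (gens ! fst q')) p" for q'
  define m where "m q = (fst q, FSB_comp y' (snd q) \<psi>)" for q :: "nat \<times> (int \<Rightarrow> int)"
  have mB: "m q \<in> sumP_basis xs' y'" if "q \<in> sumP_basis xs' y" for q
    using that comp_hom[OF _ \<psi>] by (auto simp: m_def sumP_basis_def)
  have coef: "sumP_act xs' y' y \<psi> c q' = (\<Sum>q\<in>{q \<in> sumP_basis xs' y. m q = q'}. c q)"
    if q': "q' \<in> sumP_basis xs' y'" for q'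
  proof -
    obtain j \<phi>' where q'e: "q' = (j, \<phi>')" by (cases q')
    have j: "j < length xs'" using q' q'e by (simp add: sumP_basis_def)
    have "sumP_act xs' y' y \<psi> c q' = (\<Sum>\<phi>\<in>{\<phi> \<in> FSB_hom y (xs' ! j). FSB_comp y' \<phi> \<psi> = \<phi>'}. c (j, \<phi>))"
      using q' q'e act_app by simp
    also have "\<dots> = (\<Sum>q\<in>(\<lambda>\<phi>. (j, \<phi>)) ` {\<phi> \<in> FSB_hom y (xs' ! j). FSB_comp y' \<phi> \<psi> = \<phi>'}. c q)"
      by (subst sum.reindex) (auto simp: inj_on_def)
    also have "(\<lambda>\<phi>. (j, \<phi>)) ` {\<phi> \<in> FSB_hom y (xs' ! j). FSB_comp y' \<phi> \<psi> = \<phi>'} = {q \<in> sumP_basis xs' y. m q = q'}"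
      using j by (auto simp: sumP_basis_def m_def q'e)
    finally show ?thesis .
  qed
  have "Gm xs gens y' (sumP_act xs' y' y \<psi> c) p = (\<Sum>q'\<in>sumP_basis xs' y'. sumP_act xs' y' y \<psi> c q' * H q')"
    by (simp add: Gm_def H_def xs'_def)
  also have "\<dots> = (\<Sum>q'\<in>sumP_basis xs' y'. \<Sum>q\<in>{q \<in> sumP_basis xs' y. m q = q'}. c q * H (m q))"
    by (rule sum.cong[OF refl]) (simp add: coef sum_distrib_right)
  also have "\<dots> = (\<Sum>q\<in>sumP_basis xs' y. c q * H (m q))"
    by (rule sum.group) (auto simp: finite_basis mB)
  also have "\<dots> = (\<Sum>q\<in>sumP_basis xs' y. c q * sumP_act xs y' y \<psi> (sumP_act xs y (fst (gens ! fst q)) (snd q) (snd (gens ! fst q))) p)"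
  proof (rule sum.cong[OF refl])
    fix q assume q: "q \<in> sumP_basis xs' y"
    hence "snd q \<in> FSB_hom y (fst (gens ! fst q))" by (auto simp: sumP_basis_def xs'_def)
    thus "c q * H (m q) = c q * sumP_act xs y' y \<psi> (sumP_act xs y (fst (gens ! fst q)) (snd q) (snd (gens ! fst q))) p"
      by (simp add: H_def m_def act_comp[OF \<psi>])
  qed
  also have "\<dots> = sumP_act xs y' y \<psi> (Gm xs gens y c) p"
    unfolding Gm_def xs'_def by (simp add: act_sum[OF finite_basis])
  finally show "Gm xs gens y' (sumP_act (map fst gens) y' y \<psi> c) p = sumP_act xs y' y \<psi> (Gm xs gens y c) p"
    by (simp add: xs'_def)
qed

locale grob =
  fixes xs :: "nat list" and Q :: "nat \<Rightarrow> (nat \<times> (int \<Rightarrow> int) \<Rightarrow> 'k::ring_1) set"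
  assumes noeth: "left_noetherian TYPE('k)"
    and Qsub: "Q y \<subseteq> sumP xs y"
    and Q0: "(\<lambda>_. 0) \<in> Q y"
    and Qadd: "c \<in> Q y \<Longrightarrow> d \<in> Q y \<Longrightarrow> (\<lambda>p. c p + d p) \<in> Q y"
    and Qsc: "c \<in> Q y \<Longrightarrow> (\<lambda>p. a * c p) \<in> Q y"
    and Qact: "\<psi> \<in> FSB_hom y' y \<Longrightarrow> c \<in> Q y \<Longrightarrow> sumP_act xs y' y \<psi> c \<in> Q y'"
begin

definition Iset :: "nat \<times> nat \<times> (int \<Rightarrow> int) \<Rightarrow> 'k set" where
  "Iset b = {a. \<exists>c\<in>Q (fst b). vanab xs (fst b) (snd b) c \<and> c (snd b) = a}"

lemma Iset_ideal: "left_ideal (Iset b)"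
proof -
  have 0: "0 \<in> Iset b" unfolding Iset_def using Q0 by (auto simp: vanab_def)
  have add: "x + y \<in> Iset b" if "x \<in> Iset b" "y \<in> Iset b" for x y
  proof -
    from that obtain c d where "c \<in> Q (fst b)" "vanab xs (fst b) (snd b) c" "c (snd b) = x"
      "d \<in> Q (fst b)" "vanab xs (fst b) (snd b) d" "d (snd b) = y" unfolding Iset_def by blast
    thus ?thesis unfolding Iset_def using Qadd by (auto simp: vanab_def intro!: bexI[of _ "\<lambda>p. c p + d p"])
  qed
  have mul: "r * x \<in> Iset b" if "x \<in> Iset b" for x r
  proof -
    from that obtain c where "c \<in> Q (fst b)" "vanab xs (fst b) (snd b) c" "c (snd b) = x"
      unfolding Iset_def by blast
    thus ?thesis unfolding Iset_def using Qsc by (auto simp: vanab_def intro!: bexI[of _ "\<lambda>p. r * c p"])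
  qed
  have neg: "- x \<in> Iset b" if "x \<in> Iset b" for x using mul[OF that, of "-1"] by simp
  show ?thesis unfolding left_ideal_def using 0 add mul neg by blast
qed

lemma Iset_mono:
  assumes b: "b \<in> Tset xs" and d: "divd b b'"
  shows "Iset b \<subseteq> Iset b'"
proof
  fix a assume "a \<in> Iset b"
  then obtain c where c: "c \<in> Q (fst b)" "vanab xs (fst b) (snd b) c" "c (snd b) = a" unfolding Iset_def by blast
  obtain y i w where be: "b = (y, i, w)" by (cases b) auto
  obtain y' i' w' where b'e: "b' = (y', i', w')" by (cases b') auto
  from d obtain \<psi> where o: "ordh y' y \<psi>" and ii: "i' = i" and w': "w' = FSB_comp y' w \<psi>"
    by (auto simp: divd_def be b'e)
  have bb: "(i, w) \<in> sumP_basis xs y" using b by (simp add: be Tset_def sumP_basis_def)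
  have cs: "c \<in> sumP xs y" using c(1) Qsub be by auto
  have "sumP_act xs y' y \<psi> c \<in> Q y'" using Qact c(1) o by (simp add: be ordh_def)
  moreover note act_lead[OF o cs bb] 
  ultimately show "a \<in> Iset b'" unfolding Iset_def using c by (auto simp: be b'e ii w')
qed

lemma fin_basis:
  "\<exists>Fs. finite Fs \<and> Fs \<subseteq> Tset xs \<and> (\<forall>b\<in>Tset xs. \<exists>f\<in>Fs. divd f b \<and> Iset b \<subseteq> Iset f)"
proof (rule ccontr)
  define R where "R f b \<longleftrightarrow> divd f b \<and> Iset b \<subseteq> Iset f" for f b
  assume nt: "\<not> ?thesis"
  have H: "\<exists>b\<in>Tset xs. \<forall>f\<in>F. \<not> R f b" if "finite F" "F \<subseteq> Tset xs" for F
  proof (rule ccontr)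
    assume "\<not> (\<exists>b\<in>Tset xs. \<forall>f\<in>F. \<not> R f b)"
    hence "\<forall>b\<in>Tset xs. \<exists>f\<in>F. divd f b \<and> Iset b \<subseteq> Iset f" unfolding R_def by blast
    hence "finite F \<and> F \<subseteq> Tset xs \<and> (\<forall>b\<in>Tset xs. \<exists>f\<in>F. divd f b \<and> Iset b \<subseteq> Iset f)"
      using that by blast
    thus False using nt by blast
  qed
  define nx where "nx L = (SOME b. b \<in> Tset xs \<and> (\<forall>f\<in>set L. \<not> R f b))" for L
  have nx: "nx L \<in> Tset xs \<and> (\<forall>f\<in>set L. \<not> R f (nx L))" if "set L \<subseteq> Tset xs" for L
  proof -
    have "\<exists>b. b \<in> Tset xs \<and> (\<forall>f\<in>set L. \<not> R f b)" using H[OF List.finite_set that] by blast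
    thus ?thesis unfolding nx_def by (rule someI_ex)
  qed
  define Lq where "Lq n = ((\<lambda>L. L @ [nx L]) ^^ n) []" for n
  have LS: "Lq (Suc n) = Lq n @ [nx (Lq n)]" for n unfolding Lq_def by simp
  have LT: "set (Lq n) \<subseteq> Tset xs" for n
  proof (induct n)
    case 0 thus ?case by (simp add: Lq_def)
  next
    case (Suc n) thus ?case using nx[OF Suc] by (simp add: LS)
  qed
  define s where "s n = nx (Lq n)" for n
  have sT: "\<forall>n. s n \<in> Tset xs" using nx[OF LT] by (simp add: s_def)
  have Lmono: "set (Lq m) \<subseteq> set (Lq n)" if "m \<le> n" for m n
    using that
  proof (induct n)
    case 0 thus ?case by simp
  next
    case (Suc n)
    show ?case
    proof (cases "m \<le> n")
      case True
      with Suc have "set (Lq m) \<subseteq> set (Lq n)" by blast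
      thus ?thesis by (auto simp: LS)
    next
      case False
      with Suc.prems have "m = Suc n" by simp
      thus ?thesis by simp
    qed
  qed
  have sbad: "\<not> R (s i) (s j)" if "i < j" for i j
  proof -
    have "s i \<in> set (Lq (Suc i))" by (simp add: LS s_def)
    moreover have "Suc i \<le> j" using that by simp
    hence "set (Lq (Suc i)) \<subseteq> set (Lq j)" by (rule Lmono)
    ultimately have "s i \<in> set (Lq j)" by blast
    thus ?thesis using nx[OF LT[of j]] by (simp add: s_def)
  qed
  obtain \<phi> :: "nat \<Rightarrow> nat" where \<phi>: "strict_mono \<phi>" "\<forall>i j. i < j \<longrightarrow> divd (s (\<phi> i)) (s (\<phi> j))"
    using good_subseq[of "Tset xs" divd s] div_good sT by blast
  have "\<exists>N. \<forall>n\<ge>N. Iset (s (\<phi> n)) = Iset (s (\<phi> N))"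
  proof -
    have "(\<forall>n. left_ideal (Iset (s (\<phi> n)))) \<and> (\<forall>n. Iset (s (\<phi> n)) \<subseteq> Iset (s (\<phi> (Suc n))))"
      using Iset_ideal Iset_mono sT \<phi>(2) by blast
    thus ?thesis using noeth[unfolded left_noetherian_def, rule_format, of "\<lambda>n. Iset (s (\<phi> n))"] by blast
  qed
  then obtain N where N: "\<forall>n\<ge>N. Iset (s (\<phi> n)) = Iset (s (\<phi> N))" by blast
  have "Suc N \<ge> N" by simp
  with N have "Iset (s (\<phi> (Suc N))) = Iset (s (\<phi> N))" by blast
  moreover have "divd (s (\<phi> N)) (s (\<phi> (Suc N)))" using \<phi>(2) by simp
  ultimately have "R (s (\<phi> N)) (s (\<phi> (Suc N)))" unfolding R_def by simp
  moreover have "\<phi> N < \<phi> (Suc N)" using \<phi>(1) by (simp add: strict_mono_def)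
  ultimately show False using sbad by blast
qed

definition Good :: "(nat \<times> (nat \<times> (int \<Rightarrow> int) \<Rightarrow> 'k)) list \<Rightarrow> bool" where
  "Good gens \<longleftrightarrow> (\<forall>g\<in>set gens. snd g \<in> Q (fst g)) \<and>
     (\<forall>b\<in>Tset xs. \<exists>f\<in>Tset xs. \<exists>as. divd f b \<and> Iset b \<subseteq> lgen as \<and>
        (\<forall>a\<in>set as. \<exists>c. (fst f, c) \<in> set gens \<and> vanab xs (fst f) (snd f) c \<and> c (snd f) = a))"

lemma good_exists: "\<exists>gens. Good gens"
proof -
  obtain Fs where Fs: "finite Fs" "Fs \<subseteq> Tset xs" "\<forall>b\<in>Tset xs. \<exists>f\<in>Fs. divd f b \<and> Iset b \<subseteq> Iset f"
    using fin_basis by blast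
  obtain fl where fl: "set fl = Fs" using finite_list[OF Fs(1)] by blast
  define as where "as f = (SOME as. set as \<subseteq> Iset f \<and> lgen as = Iset f)" for f
  have as: "set (as f) \<subseteq> Iset f \<and> lgen (as f) = Iset f" for f
  proof -
    have ex: "\<exists>as. set as \<subseteq> Iset f \<and> lgen as = Iset f" by (rule noeth_fg[OF noeth Iset_ideal])
    show ?thesis unfolding as_def by (rule someI_ex[OF ex])
  qed
  define wit where "wit f a = (SOME c. c \<in> Q (fst f) \<and> vanab xs (fst f) (snd f) c \<and> c (snd f) = a)" for f a
  have wit: "wit f a \<in> Q (fst f) \<and> vanab xs (fst f) (snd f) (wit f a) \<and> wit f a (snd f) = a" if "a \<in> Iset f" for f a
  proof -
    have ex: "\<exists>c. c \<in> Q (fst f) \<and> vanab xs (fst f) (snd f) c \<and> c (snd f) = a"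
      using that by (auto simp: Iset_def)
    show ?thesis unfolding wit_def by (rule someI_ex[OF ex])
  qed
  define gens where "gens = concat (map (\<lambda>f. map (\<lambda>a. (fst f, wit f a)) (as f)) fl)"
  have g1: "\<forall>g\<in>set gens. snd g \<in> Q (fst g)"
  proof
    fix g assume "g \<in> set gens"
    then obtain f a where fa: "a \<in> set (as f)" "g = (fst f, wit f a)" by (auto simp: gens_def)
    hence "a \<in> Iset f" using as by blast
    thus "snd g \<in> Q (fst g)" using wit fa by simp
  qed
  have g2: "(fst f, wit f a) \<in> set gens" if "f \<in> Fs" "a \<in> set (as f)" for f a
    using that fl by (auto simp: gens_def)
  have "\<forall>b\<in>Tset xs. \<exists>f\<in>Tset xs. \<exists>as. divd f b \<and> Iset b \<subseteq> lgen as \<and>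
        (\<forall>a\<in>set as. \<exists>c. (fst f, c) \<in> set gens \<and> vanab xs (fst f) (snd f) c \<and> c (snd f) = a)"
  proof
    fix b assume "b \<in> Tset xs"
    then obtain f where f: "f \<in> Fs" "divd f b" "Iset b \<subseteq> Iset f" using Fs(3) by blast
    have "\<forall>a\<in>set (as f). \<exists>c. (fst f, c) \<in> set gens \<and> vanab xs (fst f) (snd f) c \<and> c (snd f) = a"
      using g2[OF f(1)] wit as by blast
    moreover have "Iset b \<subseteq> lgen (as f)" using f(3) as by simp
    ultimately show "\<exists>f\<in>Tset xs. \<exists>as. divd f b \<and> Iset b \<subseteq> lgen as \<and>
        (\<forall>a\<in>set as. \<exists>c. (fst f, c) \<in> set gens \<and> vanab xs (fst f) (snd f) c \<and> c (snd f) = a)"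
      using f Fs(2) by blast
  qed
  with g1 show ?thesis unfolding Good_def by blast
qed


lemma D_ideal:
  assumes gQ: "\<forall>g\<in>set gens. snd g \<in> Q (fst g)" and o: "ordh y yf \<psi>"
    and wg: "wg \<in> FSB_hom yf (xs ! i)" and i: "i < length xs"
  defines "D \<equiv> {a. \<exists>e\<in>sumP (map fst gens) y. Gm xs gens y e \<in> Q y \<and>
      vanab xs y (i, FSB_comp y wg \<psi>) (Gm xs gens y e) \<and> Gm xs gens y e (i, FSB_comp y wg \<psi>) = a}"
  shows "left_ideal D"
    and "(yf, c) \<in> set gens \<Longrightarrow> vanab xs yf (i, wg) c \<Longrightarrow> c (i, wg) \<in> D"
proof -
  let ?bb = "(i, FSB_comp y wg \<psi>)"
  let ?G = "Gm xs gens y"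
  have 0: "0 \<in> D" unfolding D_def
    by (rule CollectI, rule bexI[of _ "\<lambda>_. 0"]) (auto simp: G_zero Q0 vanab_def sumP_zero)
  have add: "x + z \<in> D" if "x \<in> D" "z \<in> D" for x z
  proof -
    from that obtain e1 e2 where e: "e1 \<in> sumP (map fst gens) y" "?G e1 \<in> Q y" "vanab xs y ?bb (?G e1)" "?G e1 ?bb = x"
      "e2 \<in> sumP (map fst gens) y" "?G e2 \<in> Q y" "vanab xs y ?bb (?G e2)" "?G e2 ?bb = z"
      unfolding D_def by blast
    have "(\<lambda>q. e1 q + e2 q) \<in> sumP (map fst gens) y" using e sumP_add by blast
    moreover have "?G (\<lambda>q. e1 q + e2 q) \<in> Q y" using Qadd[OF e(2) e(6)] by (simp add: G_add)
    moreover have "vanab xs y ?bb (?G (\<lambda>q. e1 q + e2 q))" using e(3,7) by (simp add: G_add vanab_def)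
    moreover have "?G (\<lambda>q. e1 q + e2 q) ?bb = x + z" using e(4,8) by (simp add: G_add)
    ultimately show ?thesis unfolding D_def by blast
  qed
  have mul: "r * x \<in> D" if "x \<in> D" for x r
  proof -
    from that obtain e1 where e: "e1 \<in> sumP (map fst gens) y" "?G e1 \<in> Q y" "vanab xs y ?bb (?G e1)" "?G e1 ?bb = x"
      unfolding D_def by blast
    have "(\<lambda>q. r * e1 q) \<in> sumP (map fst gens) y" using e sumP_sc by blast
    moreover have "?G (\<lambda>q. r * e1 q) \<in> Q y" using Qsc[OF e(2)] by (simp add: G_sc)
    moreover have "vanab xs y ?bb (?G (\<lambda>q. r * e1 q))" using e(3) by (simp add: G_sc vanab_def)
    moreover have "?G (\<lambda>q. r * e1 q) ?bb = r * x" using e(4) by (simp add: G_sc)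
    ultimately show ?thesis unfolding D_def by blast
  qed
  have neg: "- x \<in> D" if "x \<in> D" for x using mul[OF that, of "-1"] by simp
  show "left_ideal D" unfolding left_ideal_def using 0 add mul neg by blast
  assume cg: "(yf, c) \<in> set gens" and v: "vanab xs yf (i, wg) c"
  then obtain j where j: "j < length gens" "gens ! j = (yf, c)" by (auto simp: in_set_conv_nth)
  have \<psi>: "\<psi> \<in> FSB_hom y yf" using o by (simp add: ordh_def)
  have jb: "(j, \<psi>) \<in> sumP_basis (map fst gens) y" using j \<psi> by (simp add: sumP_basis_def)
  define e where "e = (\<lambda>q. if q = (j, \<psi>) then (1::'k) else 0)"
  have Ge: "?G e = sumP_act xs y yf \<psi> c" unfolding e_def using G_delta[OF jb] j by simp
  have cQ: "c \<in> Q yf" using gQ cg by force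
  have cs: "c \<in> sumP xs yf" using cQ Qsub by blast
  have bw: "(i, wg) \<in> sumP_basis xs yf" using wg i by (simp add: sumP_basis_def)
  have "e \<in> sumP (map fst gens) y" unfolding e_def by (rule delta_sumP[OF jb])
  moreover have "?G e \<in> Q y" using Ge Qact[OF \<psi> cQ] by simp
  moreover have "vanab xs y ?bb (?G e)" using act_lead(1)[OF o cs bw v] Ge by simp
  moreover have "?G e ?bb = c (i, wg)" using act_lead(2)[OF o cs bw v] Ge by simp
  ultimately show "c (i, wg) \<in> D" unfolding D_def by blast
qed

lemma span:
  assumes G: "Good gens" and cQ: "c \<in> Q y"
  shows "c \<in> Gm xs gens y ` sumP (map fst gens) y"
proof -
  let ?G = "Gm xs gens y"
  let ?B = "sumP_basis xs y"
  have gQ: "\<forall>g\<in>set gens. snd g \<in> Q (fst g)" using G by (simp add: Good_def)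
  have G2: "\<forall>b\<in>Tset xs. \<exists>f\<in>Tset xs. \<exists>as. divd f b \<and> Iset b \<subseteq> lgen as \<and>
        (\<forall>a\<in>set as. \<exists>c. (fst f, c) \<in> set gens \<and> vanab xs (fst f) (snd f) c \<and> c (snd f) = a)"
    using G by (simp add: Good_def)
  define Sc where "Sc c = {b\<in>?B. \<exists>b'\<in>?B. c b' \<noteq> 0 \<and> key y b \<le> key y b'}" for c :: "nat \<times> (int \<Rightarrow> int) \<Rightarrow> 'k"
  have "\<forall>c. c \<in> Q y \<longrightarrow> card (Sc c) = n \<longrightarrow> c \<in> ?G ` sumP (map fst gens) y" for n
  proof (induct n rule: less_induct)
    case (less n)
    show ?case
    proof (intro allI impI)
      fix c assume cQ: "c \<in> Q y" and cn: "card (Sc c) = n"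
      have cs: "c \<in> sumP xs y" using cQ Qsub by blast
      show "c \<in> ?G ` sumP (map fst gens) y"
      proof (cases "\<forall>b\<in>?B. c b = 0")
        case True
        hence "c = (\<lambda>_. 0)" using sumP_out[OF cs] by fastforce
        hence "c = ?G (\<lambda>_. 0)" by (simp add: G_zero)
        thus ?thesis using sumP_zero by blast
      next
        case False
        define NZ where "NZ = {b\<in>?B. c b \<noteq> 0}"
        have NZf: "finite NZ" unfolding NZ_def using finite_basis by simp
        have NZne: "NZ \<noteq> {}" using False unfolding NZ_def by blast
        define K where "K = Max (key y ` NZ)"
        have "K \<in> key y ` NZ" unfolding K_def using NZf NZne by simp
        then obtain b where b: "b \<in> NZ" "key y b = K" by blast
        have bB: "b \<in> ?B" and cb: "c b \<noteq> 0" using b(1) by (auto simp: NZ_def)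
        have Kmax: "key y b' \<le> K" if "b' \<in> ?B" "c b' \<noteq> 0" for b'
          unfolding K_def using NZf that by (intro Max_ge) (auto simp: NZ_def)
        have vb: "vanab xs y b c" unfolding vanab_def using Kmax b(2) by fastforce
        obtain i w where be: "b = (i, w)" by (cases b)
        have iw: "i < length xs" "w \<in> FSB_hom y (xs ! i)" using bB by (auto simp: be sumP_basis_def)
        have bT: "(y, i, w) \<in> Tset xs" using iw by (simp add: Tset_def)
        obtain f as where f: "f \<in> Tset xs" "divd f (y, i, w)" "Iset (y, i, w) \<subseteq> lgen as"
          "\<forall>a\<in>set as. \<exists>c. (fst f, c) \<in> set gens \<and> vanab xs (fst f) (snd f) c \<and> c (snd f) = a"
          using G2 bT by blast
        obtain yf i' wg where fe: "f = (yf, i', wg)" by (cases f) auto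
        from f(2) obtain \<psi> where ii: "i' = i" and o: "ordh y yf \<psi>" and ww: "w = FSB_comp y wg \<psi>"
          by (auto simp: divd_def fe)
        have wg: "wg \<in> FSB_hom yf (xs ! i)" using f(1) by (simp add: fe ii Tset_def)
        define D where "D = {a. \<exists>e\<in>sumP (map fst gens) y. Gm xs gens y e \<in> Q y \<and>
          vanab xs y (i, FSB_comp y wg \<psi>) (Gm xs gens y e) \<and> Gm xs gens y e (i, FSB_comp y wg \<psi>) = a}"
        have Did: "left_ideal D" unfolding D_def by (rule D_ideal(1)[OF gQ o wg iw(1)])
        have asD: "set as \<subseteq> D"
        proof
          fix a assume "a \<in> set as"
          then obtain c0 where "(yf, c0) \<in> set gens" "vanab xs yf (i, wg) c0" "c0 (i, wg) = a"
            using f(4) by (auto simp: fe ii)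
          thus "a \<in> D" unfolding D_def using D_ideal(2)[OF gQ o wg iw(1)] by blast
        qed
        have "c b \<in> Iset (y, i, w)" unfolding Iset_def using cQ vb by (auto simp: be)
        hence "c b \<in> D" using f(3) lgen_sub[OF Did asD] by blast
        then obtain e where e: "e \<in> sumP (map fst gens) y" "?G e \<in> Q y" "vanab xs y b (?G e)" "?G e b = c b"
          unfolding D_def by (auto simp: be ww)
        define c' where "c' = (\<lambda>p. c p + (-1) * ?G e p)"
        have c'Q: "c' \<in> Q y" unfolding c'_def by (rule Qadd[OF cQ Qsc[OF e(2)]])
        have c'0: "c' b' = 0" if "b' \<in> ?B" "\<not> key y b' < key y b" for b'
        proof (cases "key y b' = key y b")
          case True
          hence "b' = b" using key_inj[OF that(1) bB] by simp
          thus ?thesis using e(4) by (simp add: c'_def)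
        next
          case False
          hence "key y b < key y b'" using that(2) by simp
          thus ?thesis using vb e(3) that(1) by (simp add: vanab_def c'_def)
        qed
        have sub: "Sc c' \<subset> Sc c"
        proof
          show "Sc c' \<subseteq> Sc c"
          proof
            fix x assume "x \<in> Sc c'"
            then obtain b' where x: "x \<in> ?B" "b' \<in> ?B" "c' b' \<noteq> 0" "key y x \<le> key y b'" unfolding Sc_def by blast
            have "key y b' < key y b" using c'0[OF x(2)] x(3) by blast
            thus "x \<in> Sc c" unfolding Sc_def using x(1,4) bB cb by force
          qed
          have "b \<in> Sc c" unfolding Sc_def using bB cb by blast
          moreover have "b \<notin> Sc c'"
          proof
            assume "b \<in> Sc c'"
            then obtain b' where "b' \<in> ?B" "c' b' \<noteq> 0" "key y b \<le> key y b'" unfolding Sc_def by blast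
            thus False using c'0 by fastforce
          qed
          ultimately show "Sc c' \<noteq> Sc c" by blast
        qed
        have "finite (Sc c)" unfolding Sc_def using finite_basis by simp
        hence "card (Sc c') < n" using psubset_card_mono[OF _ sub] cn by simp
        with less c'Q obtain e' where e': "e' \<in> sumP (map fst gens) y" "c' = ?G e'" by blast
        have "c = (\<lambda>p. c' p + ?G e p)" by (simp add: c'_def)
        also have "\<dots> = ?G (\<lambda>q. e' q + e q)" by (simp add: G_add e'(2))
        finally show ?thesis using sumP_add[OF e'(1) e(1)] by blast
      qed
    qed
  qed
  thus ?thesis using cQ by blast
qed

end

context grob begin

lemma Qsum: "finite A \<Longrightarrow> (\<forall>q\<in>A. h q \<in> Q y) \<Longrightarrow> (\<lambda>p. \<Sum>q\<in>A. h q p) \<in> Q y"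
proof (induct A rule: finite_induct)
  case empty then show ?case using Q0 by simp
next
  case (insert x F)
  hence "(\<lambda>p. h x p + (\<Sum>q\<in>F. h q p)) \<in> Q y" using Qadd[of "h x" y "\<lambda>p. \<Sum>q\<in>F. h q p"] by simp
  thus ?case using insert by simp
qed

lemma G_Q:
  assumes gQ: "\<forall>g\<in>set gens. snd g \<in> Q (fst g)"
  shows "Gm xs gens y c \<in> Q y"
  unfolding Gm_def
proof (rule Qsum[OF finite_basis], intro ballI)
  fix q assume q: "q \<in> sumP_basis (map fst gens) y"
  hence j: "fst q < length gens" "snd q \<in> FSB_hom y (fst (gens ! fst q))" by (auto simp: sumP_basis_def)
  hence "snd (gens ! fst q) \<in> Q (fst (gens ! fst q))" using gQ by auto
  hence "sumP_act xs y (fst (gens ! fst q)) (snd q) (snd (gens ! fst q)) \<in> Q y" using Qact[OF j(2)] by blast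
  thus "(\<lambda>p. c q * sumP_act xs y (fst (gens ! fst q)) (snd q) (snd (gens ! fst q)) p) \<in> Q y" by (rule Qsc)
qed

end

lemma module_sc0:
  assumes M: "left_module V add z sc" and x: "x \<in> V"
  shows "sc 0 x = z"
proof -
  have S: "\<forall>a. \<forall>x\<in>V. sc a x \<in> V" using M unfolding left_module_def by (elim conjE) assumption
  have A: "\<forall>x\<in>V. \<forall>y\<in>V. \<forall>w\<in>V. add (add x y) w = add x (add y w)" using M unfolding left_module_def by (elim conjE) assumption
  have Cm: "\<forall>x\<in>V. \<forall>y\<in>V. add x y = add y x" using M unfolding left_module_def by (elim conjE) assumption
  have Z: "\<forall>x\<in>V. add z x = x" using M unfolding left_module_def by (elim conjE) assumption
  have I: "\<forall>x\<in>V. \<exists>y\<in>V. add x y = z" using M unfolding left_module_def by (elim conjE) assumption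
  have Z0: "z \<in> V" using M unfolding left_module_def by (elim conjE) assumption
  have D: "\<forall>a b. \<forall>x\<in>V. sc (a + b) x = add (sc a x) (sc b x)" using M unfolding left_module_def by (elim conjE) assumption
  let ?u = "sc 0 x"
  have uV: "?u \<in> V" using S x by blast
  have "sc (0 + 0) x = add ?u ?u" using D x by blast
  hence uu: "add ?u ?u = ?u" by simp
  obtain v where v: "v \<in> V" "add ?u v = z" using I uV by blast
  have "z = add (add ?u ?u) v" using uu v by simp
  also have "\<dots> = add ?u (add ?u v)" using A uV v(1) by blast
  also have "\<dots> = add ?u z" using v by simp
  also have "\<dots> = add z ?u" using Cm uV M by (simp add: left_module_def)
  also have "\<dots> = ?u" using Z uV by blast
  finally show ?thesis by simp
qed

theorem mainTheorem1:
  fixes C N :: "nat \<Rightarrow> 'm set"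
    and add :: "nat \<Rightarrow> 'm \<Rightarrow> 'm \<Rightarrow> 'm"
    and z :: "nat \<Rightarrow> 'm"
    and sc :: "nat \<Rightarrow> 'k::ring_1 \<Rightarrow> 'm \<Rightarrow> 'm"
    and act :: "nat \<Rightarrow> nat \<Rightarrow> (int \<Rightarrow> int) \<Rightarrow> 'm \<Rightarrow> 'm"
  assumes "left_noetherian TYPE('k)"
    and "FSBop_module C add z sc act"
    and "FSBop_fg C add z sc act"
    and "FSBop_submodule C add z sc act N"
  shows "FSBop_fg N add z sc act"
proof -
  note noeth = assms(1)
  have Mod: "left_module (C n) (add n) (z n) (sc n)" for n using assms(2) by (simp add: FSBop_module_def)
  have Nsub: "N n \<subseteq> C n" "z n \<in> N n" "\<And>x y. x \<in> N n \<Longrightarrow> y \<in> N n \<Longrightarrow> add n x y \<in> N n"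
      "\<And>a x. x \<in> N n \<Longrightarrow> sc n a x \<in> N n" for n
    using assms(4) by (auto simp: FSBop_submodule_def)
  have Nact: "\<And>x. \<phi> \<in> FSB_hom m n \<Longrightarrow> x \<in> N n \<Longrightarrow> act m n \<phi> x \<in> N m" for m n \<phi>
    using assms(4) by (auto simp: FSBop_submodule_def)
  obtain xs and F :: "nat \<Rightarrow> (nat \<times> (int \<Rightarrow> int) \<Rightarrow> 'k) \<Rightarrow> 'm" where
    F1: "\<forall>y. \<forall>c\<in>sumP xs y. F y c \<in> C y"
    and F2: "\<forall>y. \<forall>c\<in>sumP xs y. \<forall>d\<in>sumP xs y. F y (\<lambda>p. c p + d p) = add y (F y c) (F y d)"
    and F3: "\<forall>y a. \<forall>c\<in>sumP xs y. F y (\<lambda>p. a * c p) = sc y a (F y c)"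
    and F4: "\<forall>y y'. \<forall>\<psi>\<in>FSB_hom y' y. \<forall>c\<in>sumP xs y. F y' (sumP_act xs y' y \<psi> c) = act y' y \<psi> (F y c)"
    and F5: "\<forall>y. F y ` sumP xs y = C y"
    using assms(3) unfolding FSBop_fg_def by (elim exE conjE) (rule that; assumption)
  define Q where "Q y = {c \<in> sumP xs y. F y c \<in> N y}" for y
  have F0: "F y (\<lambda>_. 0) = z y" for y
  proof -
    have "F y (\<lambda>p. 0 * (0::'k)) = sc y 0 (F y (\<lambda>_. 0))"
      using bspec[OF F3[THEN spec[of _ y], THEN spec[of _ 0]] sumP_zero[of xs y]] by simp
    moreover have "F y (\<lambda>_. 0) \<in> C y" using F1 sumP_zero by blast
    ultimately show ?thesis using module_sc0[OF Mod] by simp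
  qed
  interpret g: grob xs Q
  proof
    show "left_noetherian TYPE('k)" by (rule noeth)
    show "Q y \<subseteq> sumP xs y" for y by (auto simp: Q_def)
    show "(\<lambda>_. 0) \<in> Q y" for y using F0 Nsub(2) sumP_zero by (simp add: Q_def)
    show "(\<lambda>p. c p + d p) \<in> Q y" if "c \<in> Q y" "d \<in> Q y" for c d y
    proof -
      have cd: "c \<in> sumP xs y" "d \<in> sumP xs y" "F y c \<in> N y" "F y d \<in> N y" using that by (auto simp: Q_def)
      have "(\<lambda>p. c p + d p) \<in> sumP xs y" using sumP_add[OF cd(1,2)] .
      moreover have "F y (\<lambda>p. c p + d p) = add y (F y c) (F y d)" using F2 cd(1,2) by blast
      ultimately show ?thesis using Nsub(3)[OF cd(3,4)] by (simp add: Q_def)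
    qed
    show "(\<lambda>p. a * c p) \<in> Q y" if "c \<in> Q y" for c y a
    proof -
      have cd: "c \<in> sumP xs y" "F y c \<in> N y" using that by (auto simp: Q_def)
      have "(\<lambda>p. a * c p) \<in> sumP xs y" using sumP_sc[OF cd(1)] .
      moreover have "F y (\<lambda>p. a * c p) = sc y a (F y c)" using F3 cd(1) by blast
      ultimately show ?thesis using Nsub(4)[OF cd(2)] by (simp add: Q_def)
    qed
    show "sumP_act xs y' y \<psi> c \<in> Q y'" if "\<psi> \<in> FSB_hom y' y" "c \<in> Q y" for \<psi> y' y c
    proof -
      have cd: "c \<in> sumP xs y" "F y c \<in> N y" using that by (auto simp: Q_def)
      have "F y' (sumP_act xs y' y \<psi> c) = act y' y \<psi> (F y c)" using F4 cd(1) that(1) by blast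
      thus ?thesis using Nact[OF that(1) cd(2)] act_sumP by (simp add: Q_def)
    qed
  qed
  obtain gens where G: "g.Good gens" using g.good_exists by blast
  have gQ: "\<forall>g\<in>set gens. snd g \<in> Q (fst g)" using G by (simp add: g.Good_def)
  define F' where "F' y c = F y (Gm xs gens y c)" for y c
  have GQ: "Gm xs gens y c \<in> Q y" for y c using g.G_Q[OF gQ] .
  have P1: "\<forall>y. \<forall>c\<in>sumP (map fst gens) y. F' y c \<in> N y"
    using GQ by (simp add: F'_def Q_def)
  have P2: "\<forall>y. \<forall>c\<in>sumP (map fst gens) y. \<forall>d\<in>sumP (map fst gens) y. F' y (\<lambda>p. c p + d p) = add y (F' y c) (F' y d)"
  proof (intro allI ballI)
    fix y c d
    have "Gm xs gens y c \<in> sumP xs y" "Gm xs gens y d \<in> sumP xs y" by (rule G_sumP)+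
    thus "F' y (\<lambda>p. c p + d p) = add y (F' y c) (F' y d)"
      using F2 by (simp add: F'_def G_add)
  qed
  have P3: "\<forall>y a. \<forall>c\<in>sumP (map fst gens) y. F' y (\<lambda>p. a * c p) = sc y a (F' y c)"
  proof (intro allI ballI)
    fix y a c
    have "Gm xs gens y c \<in> sumP xs y" by (rule G_sumP)
    thus "F' y (\<lambda>p. a * c p) = sc y a (F' y c)"
      using F3 by (simp add: F'_def G_sc)
  qed
  have P4: "\<forall>y y'. \<forall>\<psi>\<in>FSB_hom y' y. \<forall>c\<in>sumP (map fst gens) y.
           F' y' (sumP_act (map fst gens) y' y \<psi> c) = act y' y \<psi> (F' y c)"
  proof (intro allI ballI)
    fix y y' \<psi> c assume \<psi>: "\<psi> \<in> FSB_hom y' y"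
    have "Gm xs gens y c \<in> sumP xs y" by (rule G_sumP)
    thus "F' y' (sumP_act (map fst gens) y' y \<psi> c) = act y' y \<psi> (F' y c)"
      using F4 \<psi> by (simp add: F'_def G_nat[OF \<psi>])
  qed
  have P5: "\<forall>y. F' y ` sumP (map fst gens) y = N y"
  proof
    fix y
    show "F' y ` sumP (map fst gens) y = N y"
    proof
      show "F' y ` sumP (map fst gens) y \<subseteq> N y" using GQ by (auto simp: F'_def Q_def)
      show "N y \<subseteq> F' y ` sumP (map fst gens) y"
      proof
        fix x assume x: "x \<in> N y"
        hence "x \<in> F y ` sumP xs y" using Nsub(1) F5 by blast
        then obtain c where c: "c \<in> sumP xs y" "x = F y c" by blast
        hence "c \<in> Q y" using x by (simp add: Q_def)
        then obtain e where "e \<in> sumP (map fst gens) y" "c = Gm xs gens y e" using g.span[OF G] by blast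
        thus "x \<in> F' y ` sumP (map fst gens) y" using c by (auto simp: F'_def)
      qed
    qed
  qed
  have "\<exists>F''. (\<forall>y. \<forall>c\<in>sumP (map fst gens) y. F'' y c \<in> N y)
      \<and> (\<forall>y. \<forall>c\<in>sumP (map fst gens) y. \<forall>d\<in>sumP (map fst gens) y. F'' y (\<lambda>p. c p + d p) = add y (F'' y c) (F'' y d))
      \<and> (\<forall>y a. \<forall>c\<in>sumP (map fst gens) y. F'' y (\<lambda>p. a * c p) = sc y a (F'' y c))
      \<and> (\<forall>y y'. \<forall>\<psi>\<in>FSB_hom y' y. \<forall>c\<in>sumP (map fst gens) y.
           F'' y' (sumP_act (map fst gens) y' y \<psi> c) = act y' y \<psi> (F'' y c))
      \<and> (\<forall>y. F'' y ` sumP (map fst gens) y = N y)"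
    by (rule exI[of _ F'], intro conjI P1 P2 P3 P4 P5)
  thus ?thesis unfolding FSBop_fg_def by (rule exI[of _ "map fst gens"])
qed

end
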